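(* (a) The set $D(h)$ is uncountable, perfect, nowhere dense, has Lebesgue measure zero, and is a self-similar fractal whose Hausdorff dimension $\alpha_0$ is the solution of $$\sum_{p\in\{1,2,\ldots,q-1\},\,p\ne u}\left(\frac1q\right)^{p\alpha_0}=1.$$ (b) The set $E(h)=\{\Delta^{-q}_{\alpha_1\alpha_2\ldots}:\alpha_n\in\Theta\}$ is a self-similar fractal with Hausdorff dimension $\log_q|\Theta|$. (c) Consequently $h$ does not preserve Hausdorff dimension: $\dim_H D(h)\ne\dim_H E(h)$.
   Context: Let $q>3$ be an integer, fix $u\in\{0,1,\ldots,q-1\}$, and put $\Theta=\{1,2,\ldots,q-1\}\setminus\{u\}$. The nega-$q$-ary representation is $\Delta^{-q}_{\beta_1\beta_2\ldots}=\sum_{k\ge1}\frac{\beta_k}{(-q)^k}$, $\beta_k\in\{0,\ldots,q-1\}$. For a sequence $(\alpha_n)_{n\ge1}$ with $\alpha_n\in\Theta$, let $x((\alpha_n))$ be the number whose nega-$q$-ary digit string is the concatenation of the blocks $\underbrace{u\ldots u}_{\alpha_n-1}\alpha_n$ ($\alpha_n-1$ copies of $u$ followed by the digit $\alpha_n$), $n=1,2,\ldots$; equivalently $x=-\frac{u}{q+1}+\sum_{n\ge1}\frac{\alpha_n-u}{(-q)^{\alpha_1+\cdots+\alpha_n}}$. Let $D(h)$ be the set of all such $x$, and define $h:D(h)\to\mathbb R$ by $h(x)=\Delta^{-q}_{\alpha_1\alpha_2\ldots}=\sum_{n\ge1}\frac{\alpha_n}{(-q)^n}$. $E(h)$ denotes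 the range of $h$ and $|\Theta|$ the number of elements of $\Theta$. *)

theory Defs
  imports "HOL-Analysis.Analysis"
begin

(* Nega-q-ary representation: digits beta 0, beta 1, ... stand for beta_1, beta_2, ... *)
definition negaq :: "nat \<Rightarrow> (nat \<Rightarrow> nat) \<Rightarrow> real" where
  "negaq q \<beta> = (\<Sum>k. real (\<beta> k) / (- real q) ^ (Suc k))"

definition Theta :: "nat \<Rightarrow> nat \<Rightarrow> nat set" where
  "Theta q u = {1..q-1} - {u}"

(* partial sums S n = alpha_1 + ... + alpha_n (alpha 0 stands for alpha_1) *)
definition psum :: "(nat \<Rightarrow> nat) \<Rightarrow> nat \<Rightarrow> nat" where
  "psum \<alpha> n = (\<Sum>i<n. \<alpha> i)"

(* Concatenation of the blocks  u...u (alpha_n - 1 times) alpha_n :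
   the digit in (1-based) position k+1 is alpha_n if k+1 = alpha_1+...+alpha_n, else u *)
definition blockdigits :: "nat \<Rightarrow> (nat \<Rightarrow> nat) \<Rightarrow> nat \<Rightarrow> nat" where
  "blockdigits u \<alpha> k =
     (if \<exists>n. Suc k = psum \<alpha> (Suc n) then \<alpha> (THE n. Suc k = psum \<alpha> (Suc n)) else u)"

definition Dh :: "nat \<Rightarrow> nat \<Rightarrow> real set" where
  "Dh q u = {negaq q (blockdigits u \<alpha>) | \<alpha>. \<forall>n. \<alpha> n \<in> Theta q u}"

definition Eh :: "nat \<Rightarrow> nat \<Rightarrow> real set" where
  "Eh q u = {negaq q \<alpha> | \<alpha>. \<forall>n. \<alpha> n \<in> Theta q u}"

definition hdiam :: "real \<Rightarrow> real set \<Rightarrow> real" where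
  "hdiam s U = (if U = {} then 0 else if s = 0 then 1 else diameter U powr s)"

definition hausdorff_pre :: "real \<Rightarrow> real \<Rightarrow> real set \<Rightarrow> ennreal" where
  "hausdorff_pre s \<delta> A =
     (INF U \<in> {U :: nat \<Rightarrow> real set. (\<forall>i. bounded (U i) \<and> diameter (U i) \<le> \<delta>)
                                   \<and> A \<subseteq> (\<Union>i. U i)}.
        (\<Sum>i. ennreal (hdiam s (U i))))"

definition hausdorff_measure :: "real \<Rightarrow> real set \<Rightarrow> ennreal" where
  "hausdorff_measure s A = (SUP \<delta> \<in> {0<..}. hausdorff_pre s \<delta> A)"

definition hausdorff_dim :: "real set \<Rightarrow> real" where
  "hausdorff_dim A = Inf {s. s \<ge> 0 \<and> hausdorff_measure s A = 0}"

definition perfect_set :: "real set \<Rightarrow> bool" where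
  "perfect_set S \<longleftrightarrow> closed S \<and> (\<forall>x\<in>S. x islimpt S)"

definition nowhere_dense :: "real set \<Rightarrow> bool" where
  "nowhere_dense S \<longleftrightarrow> interior (closure S) = {}"

definition similarity_contraction :: "(real \<Rightarrow> real) \<Rightarrow> bool" where
  "similarity_contraction f \<longleftrightarrow> (\<exists>r. 0 < r \<and> r < 1 \<and> (\<forall>x y. dist (f x) (f y) = r * dist x y))"

definition self_similar :: "real set \<Rightarrow> bool" where
  "self_similar K \<longleftrightarrow> compact K \<and> K \<noteq> {} \<and>
     (\<exists>F. finite F \<and> F \<noteq> {} \<and> (\<forall>f\<in>F. similarity_contraction f) \<and> K = (\<Union>f\<in>F. f ` K))"

end

theory Submission
  imports Defs
begin

lemma negaq_summable:
  fixes q :: nat assumes q: "q \<ge> 2" and b: "\<And>k. d k \<le> B"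
  shows "summable (\<lambda>k. real (d k) / (- real q) ^ Suc k)"
proof (rule summable_comparison_test[where g="\<lambda>k. (real B / q) * (1/real q)^k"])
  show "summable (\<lambda>k. (real B / q) * (1/real q)^k)"
    using q by (intro summable_mult summable_geometric) auto
  show "\<exists>N. \<forall>n\<ge>N. norm (real (d n) / (- real q) ^ Suc n) \<le> real B / real q * (1 / real q) ^ n"
  proof (intro exI allI impI)
    fix n
    have "norm (real (d n) / (- real q) ^ Suc n) = real (d n) / real q ^ Suc n"
      by (simp add: norm_divide abs_mult power_abs)
    also have "\<dots> \<le> real B / real q ^ Suc n"
      using b[of n] q by (intro divide_right_mono) auto
    also have "\<dots> = real B / real q * (1 / real q) ^ n"
      by (simp add: power_divide field_simps)
    finally show "norm (real (d n) / (- real q) ^ Suc n) \<le> real B / real q * (1 / real q) ^ n" .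
  qed
qed

definition dig :: "nat \<Rightarrow> (nat \<Rightarrow> nat) \<Rightarrow> bool" where
  "dig q d \<longleftrightarrow> (\<forall>k. d k \<le> q - 1)"

lemma negaq_split:
  fixes q :: nat assumes q: "q \<ge> 2" and d: "dig q d"
  shows "negaq q d = (\<Sum>k<n. real (d k) / (- real q) ^ Suc k)
            + (1 / (- real q)) ^ n * negaq q (\<lambda>k. d (k + n))"
proof -
  have s: "summable (\<lambda>k. real (d k) / (- real q) ^ Suc k)"
    using negaq_summable[OF q, of d "q-1"] d by (auto simp: dig_def)
  have s2: "summable (\<lambda>k. real (d (k+n)) / (- real q) ^ Suc k)"
    using negaq_summable[OF q, of "\<lambda>k. d (k+n)" "q-1"] d by (auto simp: dig_def)
  have "negaq q d = (\<Sum>k. real (d (k+n)) / (- real q) ^ Suc (k+n)) + (\<Sum>k<n. real (d k) / (- real q) ^ Suc k)"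
    unfolding negaq_def using suminf_split_initial_segment[OF s, of n] by simp
  also have "(\<lambda>k. real (d (k+n)) / (- real q) ^ Suc (k+n)) = (\<lambda>k. (1 / (- real q)) ^ n * (real (d (k+n)) / (- real q) ^ Suc k))"
  proof
    fix k
    have nz: "(- real q) ^ n \<noteq> 0" "(- real q) ^ Suc k \<noteq> 0" using q by auto
    show "real (d (k+n)) / (- real q) ^ Suc (k+n) = (1 / (- real q)) ^ n * (real (d (k+n)) / (- real q) ^ Suc k)"
    proof -
      have e: "(- real q) ^ Suc (k+n) = (-real q)^Suc k * (-real q)^n" by (metis add_Suc power_add)
      show ?thesis unfolding e power_one_over using nz by (simp add: field_simps)
    qed
  qed
  also have "suminf \<dots> = (1 / (- real q)) ^ n * negaq q (\<lambda>k. d (k + n))"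
    unfolding negaq_def by (rule suminf_mult[OF s2])
  finally show ?thesis by simp
qed


lemma negaq_diff:
  fixes q :: nat assumes q: "q \<ge> 2" and a: "dig q a" and b: "dig q b"
  shows "negaq q a - negaq q b = (\<Sum>k. (real (a k) - real (b k)) / (- real q) ^ Suc k)"
proof -
  have sa: "summable (\<lambda>k. real (a k) / (- real q) ^ Suc k)"
    using negaq_summable[OF q, of a "q-1"] a by (auto simp: dig_def)
  have sb: "summable (\<lambda>k. real (b k) / (- real q) ^ Suc k)"
    using negaq_summable[OF q, of b "q-1"] b by (auto simp: dig_def)
  show ?thesis unfolding negaq_def using suminf_diff[OF sa sb] by (simp add: diff_divide_distrib)
qed

lemma negaq_diff_ge:
  fixes q :: nat assumes q: "q \<ge> 2" and a: "dig q a" and b: "dig q b"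
    and sg: "\<And>k. (-1) ^ Suc k * (real (a k) - real (b k)) \<ge> 0"
  shows "negaq q a - negaq q b \<ge> (\<Sum>k<n. \<bar>real (a k) - real (b k)\<bar> / real q ^ Suc k)"
proof -
  have sa: "summable (\<lambda>k. real (a k) / (- real q) ^ Suc k)"
    using negaq_summable[OF q, of a "q-1"] a by (auto simp: dig_def)
  have sb: "summable (\<lambda>k. real (b k) / (- real q) ^ Suc k)"
    using negaq_summable[OF q, of b "q-1"] b by (auto simp: dig_def)
  have st: "summable (\<lambda>k. (real (a k) - real (b k)) / (- real q) ^ Suc k)"
    using summable_diff[OF sa sb] by (simp add: diff_divide_distrib)
  have t: "(real (a k) - real (b k)) / (- real q) ^ Suc k = \<bar>real (a k) - real (b k)\<bar> / real q ^ Suc k" for k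
  proof -
    have "(- real q) ^ Suc k = (-1) ^ Suc k * real q ^ Suc k" by (simp add: power_minus[of "real q"])
    then have "(real (a k) - real (b k)) / (- real q) ^ Suc k = ((-1) ^ Suc k * (real (a k) - real (b k))) / real q ^ Suc k"
      using q by (cases "even k") (auto simp: field_simps)
    also have "(-1) ^ Suc k * (real (a k) - real (b k)) = \<bar>real (a k) - real (b k)\<bar>"
      using sg[of k] by (cases "even k") auto
    finally show ?thesis .
  qed
  have "(\<Sum>k<n. \<bar>real (a k) - real (b k)\<bar> / real q ^ Suc k) \<le> (\<Sum>k. \<bar>real (a k) - real (b k)\<bar> / real q ^ Suc k)"
    using st unfolding t by (intro sum_le_suminf) auto
  also have "\<dots> = negaq q a - negaq q b" using negaq_diff[OF q a b] unfolding t by simp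
  finally show ?thesis .
qed

definition hpat :: "nat \<Rightarrow> nat \<Rightarrow> nat" where "hpat q k = (if odd k then q - 1 else 0)"
definition lpat :: "nat \<Rightarrow> nat \<Rightarrow> nat" where "lpat q k = (if odd k then 0 else q - 1)"

lemma dig_hpat: "dig q (hpat q)" and dig_lpat: "dig q (lpat q)"
  by (auto simp: dig_def hpat_def lpat_def)

lemma negaq_hpat: fixes q :: nat assumes q: "q \<ge> 2" shows "negaq q (hpat q) = 1 / (real q + 1)"
proof -
  have sh: "(\<lambda>k. hpat q (k + 2)) = hpat q" by (auto simp: hpat_def)
  have e: "negaq q (hpat q) = (real q - 1) / real q ^ 2 + negaq q (hpat q) / real q ^ 2"
    using negaq_split[OF q dig_hpat, of 2] q unfolding sh
    by (simp add: hpat_def eval_nat_numeral power_divide of_nat_diff)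
  have q2: "real q \<ge> 2" using q by simp
  have "negaq q (hpat q) * real q ^ 2 = (real q - 1) + negaq q (hpat q)"
    using e q2 by (simp add: field_simps)
  then have "(negaq q (hpat q) * (real q + 1) - 1) * (real q - 1) = 0"
    by (simp add: power2_eq_square algebra_simps)
  then have "negaq q (hpat q) * (real q + 1) = 1" using q2 by simp
  then show ?thesis using q2 by (simp add: field_simps)
qed

lemma negaq_lpat: fixes q :: nat assumes q: "q \<ge> 2" shows "negaq q (lpat q) = - real q / (real q + 1)"
proof -
  have sh: "(\<lambda>k. lpat q (k + 2)) = lpat q" by (auto simp: lpat_def)
  have e0: "negaq q (lpat q) = (\<Sum>k<2. real (lpat q k) / (- real q) ^ Suc k) + (1 / (- real q)) ^ 2 * negaq q (lpat q)"
    using negaq_split[OF q dig_lpat, of 2] q unfolding sh by simp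
  have q2: "real q \<ge> 2" using q by simp
  have e1: "negaq q (lpat q) = negaq q (lpat q) / (real q * real q) - (real q - 1) / real q"
    using e0 q by (simp add: lpat_def eval_nat_numeral power_divide of_nat_diff)
  have h: "real q * real q + real q * (real q * negaq q (lpat q)) = real q + negaq q (lpat q)"
    using e1 q2 by (simp add: field_simps)
  have "negaq q (lpat q) * real q ^ 2 = - (real q - 1) * real q + negaq q (lpat q)"
    using h by (simp add: power2_eq_square algebra_simps)
  then have "(negaq q (lpat q) * (real q + 1) + real q) * (real q - 1) = 0"
    by (simp add: power2_eq_square algebra_simps)
  then have "negaq q (lpat q) * (real q + 1) = - real q" using q2 by simp
  then show ?thesis using q2 by (simp add: field_simps)
qed


definition hav :: "nat \<Rightarrow> (nat \<Rightarrow> nat) \<Rightarrow> bool" where "hav q d \<longleftrightarrow> (\<exists>j<4. d j \<noteq> hpat q j)"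
definition lav :: "nat \<Rightarrow> (nat \<Rightarrow> nat) \<Rightarrow> bool" where "lav q d \<longleftrightarrow> (\<exists>j<4. d j \<noteq> lpat q j)"

lemma sum4_ge:
  fixes q :: nat assumes q: "q \<ge> 2" and j: "j < 4" and ne: "a j \<noteq> b j"
  shows "(\<Sum>k<4. \<bar>real (a k) - real (b k)\<bar> / real q ^ Suc k) \<ge> 1 / real q ^ 4"
proof -
  have "1 / real q ^ 4 \<le> 1 / real q ^ Suc j"
    using q j by (intro divide_left_mono power_increasing) auto
  also have "\<dots> \<le> \<bar>real (a j) - real (b j)\<bar> / real q ^ Suc j"
    using ne q by (intro divide_right_mono) auto
  also have "\<dots> \<le> (\<Sum>k<4. \<bar>real (a k) - real (b k)\<bar> / real q ^ Suc k)"
    using j by (intro member_le_sum) auto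
  finally show ?thesis .
qed

lemma negaq_hi:
  fixes q :: nat assumes q: "q \<ge> 2" and d: "dig q d"
  shows "negaq q d \<le> 1 / (real q + 1)" and "hav q d \<Longrightarrow> negaq q d \<le> 1 / (real q + 1) - 1 / real q ^ 4"
proof -
  have sg: "(-1) ^ Suc k * (real (hpat q k) - real (d k)) \<ge> 0" for k
    using d by (cases "even k") (auto simp: hpat_def dig_def of_nat_diff)
  from negaq_diff_ge[OF q dig_hpat d sg, of 0] show "negaq q d \<le> 1 / (real q + 1)"
    using negaq_hpat[OF q] by simp
  assume "hav q d"
  then obtain j where j: "j < 4" "d j \<noteq> hpat q j" by (auto simp: hav_def)
  from negaq_diff_ge[OF q dig_hpat d sg, of 4] sum4_ge[OF q j(1), of "hpat q" d] j
  show "negaq q d \<le> 1 / (real q + 1) - 1 / real q ^ 4"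
    using negaq_hpat[OF q] by simp
qed

lemma negaq_lo:
  fixes q :: nat assumes q: "q \<ge> 2" and d: "dig q d"
  shows "negaq q d \<ge> - real q / (real q + 1)" and "lav q d \<Longrightarrow> negaq q d \<ge> - real q / (real q + 1) + 1 / real q ^ 4"
proof -
  have sg: "(-1) ^ Suc k * (real (d k) - real (lpat q k)) \<ge> 0" for k
    using d by (cases "even k") (auto simp: lpat_def dig_def of_nat_diff)
  from negaq_diff_ge[OF q d dig_lpat sg, of 0] show "negaq q d \<ge> - real q / (real q + 1)"
    using negaq_lpat[OF q] by simp
  assume "lav q d"
  then obtain j where j: "j < 4" "d j \<noteq> lpat q j" by (auto simp: lav_def)
  from negaq_diff_ge[OF q d dig_lpat sg, of 4] sum4_ge[OF q j(1), of d "lpat q"] j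
  show "negaq q d \<ge> - real q / (real q + 1) + 1 / real q ^ 4"
    using negaq_lpat[OF q] by simp
qed

lemma negaq_dist_le:
  fixes q :: nat assumes q: "q \<ge> 2" and d: "dig q d" and e: "dig q e"
  shows "\<bar>negaq q d - negaq q e\<bar> \<le> 1"
proof -
  have "1 / (real q + 1) - (- real q / (real q + 1)) = 1" using q by (simp add: field_simps)
  then show ?thesis using negaq_hi(1)[OF q d] negaq_lo(1)[OF q d] negaq_hi(1)[OF q e] negaq_lo(1)[OF q e]
    by linarith
qed

lemma dig_shift: "dig q d \<Longrightarrow> dig q (\<lambda>j. d (j + m))" by (auto simp: dig_def)

lemma negaq_sep:
  fixes q :: nat assumes q: "q \<ge> 2" and d: "dig q d" and e: "dig q e"
    and eq: "\<And>i. i < k \<Longrightarrow> d i = e i" and ne: "d k \<noteq> e k"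
    and av: "hav q (\<lambda>j. d (j + Suc k))" "lav q (\<lambda>j. d (j + Suc k))"
            "hav q (\<lambda>j. e (j + Suc k))" "lav q (\<lambda>j. e (j + Suc k))"
  shows "\<bar>negaq q d - negaq q e\<bar> \<ge> 2 / real q ^ 4 * (1 / real q) ^ Suc k"
proof -
  define Td where "Td = negaq q (\<lambda>j. d (j + Suc k))"
  define Te where "Te = negaq q (\<lambda>j. e (j + Suc k))"
  define \<rho> where "\<rho> = (1 / (- real q)) ^ Suc k"
  have sd: "negaq q d = (\<Sum>i<Suc k. real (d i) / (- real q) ^ Suc i) + \<rho> * Td"
    using negaq_split[OF q d, of "Suc k"] unfolding Td_def \<rho>_def .
  have se: "negaq q e = (\<Sum>i<Suc k. real (e i) / (- real q) ^ Suc i) + \<rho> * Te"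
    using negaq_split[OF q e, of "Suc k"] unfolding Te_def \<rho>_def .
  have "(\<Sum>i<Suc k. real (d i) / (- real q) ^ Suc i) - (\<Sum>i<Suc k. real (e i) / (- real q) ^ Suc i)
      = (\<Sum>i<Suc k. (real (d i) - real (e i)) / (- real q) ^ Suc i)"
    by (simp only: diff_divide_distrib sum_subtractf)
  also have "\<dots> = (real (d k) - real (e k)) / (- real q) ^ Suc k"
    using eq by simp
  also have "\<dots> = \<rho> * (real (d k) - real (e k))"
    unfolding \<rho>_def power_one_over by simp
  finally have diff: "negaq q d - negaq q e = \<rho> * ((real (d k) - real (e k)) + (Td - Te))"
    using sd se by (simp add: algebra_simps)
  have arho: "\<bar>\<rho>\<bar> = (1 / real q) ^ Suc k" unfolding \<rho>_def by (simp add: power_abs)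
  have c: "1 / (real q + 1) - (- real q / (real q + 1)) = 1" using q by (simp add: field_simps)
  have "\<bar>Td - Te\<bar> \<le> 1 - 2 / real q ^ 4"
    using negaq_hi(2)[OF q dig_shift[OF d] av(1)] negaq_lo(2)[OF q dig_shift[OF d] av(2)]
      negaq_hi(2)[OF q dig_shift[OF e] av(3)] negaq_lo(2)[OF q dig_shift[OF e] av(4)] c
    unfolding Td_def Te_def by linarith
  moreover have "\<bar>real (d k) - real (e k)\<bar> \<ge> 1" using ne by linarith
  ultimately have "\<bar>(real (d k) - real (e k)) + (Td - Te)\<bar> \<ge> 2 / real q ^ 4" by linarith
  then have "\<bar>\<rho>\<bar> * \<bar>(real (d k) - real (e k)) + (Td - Te)\<bar> \<ge> \<bar>\<rho>\<bar> * (2 / real q ^ 4)"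
    by (intro mult_left_mono) auto
  then show ?thesis unfolding diff abs_mult arho by (simp add: mult.commute)
qed


definition pre :: "nat list \<Rightarrow> (nat \<Rightarrow> nat) \<Rightarrow> nat \<Rightarrow> nat" where
  "pre w \<alpha> = (\<lambda>n. if n < length w then w ! n else \<alpha> (n - length w))"

lemma pre_Nil[simp]: "pre [] \<alpha> = \<alpha>"
  by (simp add: pre_def)

lemma pre_Cons: "pre (a # w) \<alpha> = case_nat a (pre w \<alpha>)"
  by (auto simp: pre_def fun_eq_iff split: nat.split)

lemma pre_take: "pre (map \<alpha> [0..<n]) (\<lambda>i. \<alpha> (i + n)) = \<alpha>"
  by (auto simp: pre_def fun_eq_iff)

lemma case_nat_split: "case_nat (\<alpha> 0) (\<lambda>n. \<alpha> (Suc n)) = \<alpha>"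
  by (auto simp: fun_eq_iff split: nat.split)

locale ifs =
  fixes A :: "nat set" and len :: "nat \<Rightarrow> nat" and q :: real
    and p :: "(nat \<Rightarrow> nat) \<Rightarrow> real" and c r :: "nat \<Rightarrow> real" and c0 M :: real
  assumes finA: "finite A" and cardA: "card A \<ge> 2"
    and q1: "q > 1" and len1: "\<And>a. a \<in> A \<Longrightarrow> len a \<ge> 1"
    and rabs: "\<And>a. a \<in> A \<Longrightarrow> \<bar>r a\<bar> = (1/q) ^ len a"
    and shift: "\<And>a \<alpha>. a \<in> A \<Longrightarrow> (\<forall>n. \<alpha> n \<in> A) \<Longrightarrow> p (case_nat a \<alpha>) = c a + r a * p \<alpha>"
    and sep0: "\<And>\<alpha> \<beta>. (\<forall>n. \<alpha> n \<in> A) \<Longrightarrow> (\<forall>n. \<beta> n \<in> A) \<Longrightarrow> \<alpha> 0 \<noteq> \<beta> 0 \<Longrightarrow> c0 \<le> \<bar>p \<alpha> - p \<beta>\<bar>"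
    and bnd: "\<And>\<alpha> \<beta>. (\<forall>n. \<alpha> n \<in> A) \<Longrightarrow> (\<forall>n. \<beta> n \<in> A) \<Longrightarrow> \<bar>p \<alpha> - p \<beta>\<bar> \<le> M"
    and c0pos: "c0 > 0"
begin

definition C :: "(nat \<Rightarrow> nat) set" where "C = {\<alpha>. \<forall>n. \<alpha> n \<in> A}"
definition K where "K = p ` C"
definition lw where "lw w = sum_list (map len w)"

lemma A_ne: "A \<noteq> {}" using cardA by auto

lemma C_ne: "C \<noteq> {}"
proof -
  obtain a where "a \<in> A" using A_ne by auto
  then have "(\<lambda>_. a) \<in> C" by (auto simp: C_def)
  then show ?thesis by auto
qed

lemma K_ne: "K \<noteq> {}" using C_ne by (auto simp: K_def)

lemma C_cons: "a \<in> A \<Longrightarrow> \<alpha> \<in> C \<Longrightarrow> case_nat a \<alpha> \<in> C"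
  by (auto simp: C_def split: nat.split)

lemma C_pre: "set w \<subseteq> A \<Longrightarrow> \<alpha> \<in> C \<Longrightarrow> pre w \<alpha> \<in> C"
  by (induction w) (auto simp: pre_Cons intro!: C_cons)

lemma C_shift: "\<alpha> \<in> C \<Longrightarrow> (\<lambda>i. \<alpha> (i + n)) \<in> C"
  by (auto simp: C_def)

lemma C_take: "\<alpha> \<in> C \<Longrightarrow> set (map \<alpha> [0..<n]) \<subseteq> A"
  by (auto simp: C_def)

lemma M_nonneg: "M \<ge> 0"
proof -
  obtain \<alpha> where "\<alpha> \<in> C" using C_ne by auto
  then show ?thesis using bnd[of \<alpha> \<alpha>] by (auto simp: C_def)
qed

lemma word_sim: "set w \<subseteq> A \<Longrightarrow> \<exists>cc rr. \<bar>rr\<bar> = (1/q) ^ lw w \<and> (\<forall>\<alpha>\<in>C. p (pre w \<alpha>) = cc + rr * p \<alpha>)"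
proof (induction w)
  case Nil
  show ?case by (rule exI[of _ 0], rule exI[of _ 1]) (auto simp: lw_def)
next
  case (Cons a w)
  then obtain cc rr where h: "\<bar>rr\<bar> = (1/q) ^ lw w" "\<forall>\<alpha>\<in>C. p (pre w \<alpha>) = cc + rr * p \<alpha>" by auto
  have a: "a \<in> A" using Cons by auto
  show ?case
  proof (intro exI conjI ballI)
    show "\<bar>r a * rr\<bar> = (1/q) ^ lw (a # w)"
      using h(1) rabs[OF a] by (simp add: lw_def abs_mult power_add)
    fix \<alpha> assume \<alpha>: "\<alpha> \<in> C"
    have "p (pre (a # w) \<alpha>) = c a + r a * p (pre w \<alpha>)"
      unfolding pre_Cons using shift[OF a] C_pre[of w \<alpha>] Cons.prems \<alpha> by (auto simp: C_def)
    also have "\<dots> = (c a + r a * cc) + (r a * rr) * p \<alpha>" using h(2) \<alpha> by (simp add: algebra_simps)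
    finally show "p (pre (a # w) \<alpha>) = (c a + r a * cc) + (r a * rr) * p \<alpha>" .
  qed
qed

lemma lip_word:
  assumes "set w \<subseteq> A" "\<alpha> \<in> C" "\<beta> \<in> C"
  shows "\<bar>p (pre w \<alpha>) - p (pre w \<beta>)\<bar> \<le> M * (1/q) ^ lw w"
proof -
  obtain cc rr where h: "\<bar>rr\<bar> = (1/q) ^ lw w" "\<forall>\<alpha>\<in>C. p (pre w \<alpha>) = cc + rr * p \<alpha>"
    using word_sim[OF assms(1)] by auto
  have "\<bar>p (pre w \<alpha>) - p (pre w \<beta>)\<bar> = \<bar>rr\<bar> * \<bar>p \<alpha> - p \<beta>\<bar>"
    using h(2) assms by (simp add: abs_mult[symmetric] algebra_simps)
  also have "\<dots> \<le> \<bar>rr\<bar> * M" using bnd[of \<alpha> \<beta>] assms by (intro mult_left_mono) (auto simp: C_def)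
  finally show ?thesis using h(1) by (simp add: mult.commute)
qed

lemma sep_word:
  assumes "set w \<subseteq> A" "\<alpha> \<in> C" "\<beta> \<in> C" "\<alpha> 0 \<noteq> \<beta> 0"
  shows "c0 * (1/q) ^ lw w \<le> \<bar>p (pre w \<alpha>) - p (pre w \<beta>)\<bar>"
proof -
  obtain cc rr where h: "\<bar>rr\<bar> = (1/q) ^ lw w" "\<forall>\<alpha>\<in>C. p (pre w \<alpha>) = cc + rr * p \<alpha>"
    using word_sim[OF assms(1)] by auto
  have "\<bar>p (pre w \<alpha>) - p (pre w \<beta>)\<bar> = \<bar>rr\<bar> * \<bar>p \<alpha> - p \<beta>\<bar>"
    using h(2) assms by (simp add: abs_mult[symmetric] algebra_simps)
  moreover have "\<bar>rr\<bar> * c0 \<le> \<bar>rr\<bar> * \<bar>p \<alpha> - p \<beta>\<bar>"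
    using sep0[of \<alpha> \<beta>] assms by (intro mult_left_mono) (auto simp: C_def)
  ultimately show ?thesis using h(1) by (simp add: mult.commute)
qed

definition L where "L = Max (len ` A)"

lemma len_le_L: "a \<in> A \<Longrightarrow> len a \<le> L"
  unfolding L_def using finA by auto

lemma lw_take_Suc: "lw (map \<alpha> [0..<Suc n]) = lw (map \<alpha> [0..<n]) + len (\<alpha> n)"
  by (simp add: lw_def)

lemma lw_take_ge: "\<alpha> \<in> C \<Longrightarrow> lw (map \<alpha> [0..<n]) \<ge> n"
proof (induction n)
  case (Suc n)
  then show ?case using len1[of "\<alpha> n"] by (simp add: lw_def C_def)
qed simp

lemma lw_take_mono: "m \<le> n \<Longrightarrow> lw (map \<alpha> [0..<m]) \<le> lw (map \<alpha> [0..<n])"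
proof (induction n)
  case (Suc n)
  then show ?case by (cases "m = Suc n") (auto simp: lw_def)
qed simp

lemma lw_take_Suc_le: "\<alpha> \<in> C \<Longrightarrow> lw (map \<alpha> [0..<Suc n]) \<le> lw (map \<alpha> [0..<n]) + L"
  using len_le_L[of "\<alpha> n"] by (simp add: lw_def C_def)

lemma take_eq: "(\<forall>i<n. \<alpha> i = \<beta> i) \<Longrightarrow> map \<alpha> [0..<n] = map \<beta> [0..<n]"
  by auto

lemma lip:
  assumes "\<alpha> \<in> C" "\<beta> \<in> C" "\<forall>i<n. \<alpha> i = \<beta> i"
  shows "\<bar>p \<alpha> - p \<beta>\<bar> \<le> M * (1/q) ^ lw (map \<alpha> [0..<n])"
proof -
  have "\<bar>p (pre (map \<alpha> [0..<n]) (\<lambda>i. \<alpha> (i + n))) - p (pre (map \<alpha> [0..<n]) (\<lambda>i. \<beta> (i + n)))\<bar>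
    \<le> M * (1/q) ^ lw (map \<alpha> [0..<n])"
    using assms by (intro lip_word C_take C_shift)
  moreover have "pre (map \<alpha> [0..<n]) (\<lambda>i. \<beta> (i + n)) = \<beta>"
  proof -
    have e: "map \<alpha> [0..<n] = map \<beta> [0..<n]" using assms(3) by (intro map_cong) auto
    show ?thesis unfolding e by (rule pre_take)
  qed
  ultimately show ?thesis by (simp add: pre_take)
qed

lemma lip_n:
  assumes "\<alpha> \<in> C" "\<beta> \<in> C" "\<forall>i<n. \<alpha> i = \<beta> i"
  shows "\<bar>p \<alpha> - p \<beta>\<bar> \<le> M * (1/q) ^ n"
proof -
  have "(1/q) ^ lw (map \<alpha> [0..<n]) \<le> (1/q) ^ n"
    using q1 lw_take_ge[OF assms(1), of n] by (intro power_decreasing) auto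
  then show ?thesis using lip[OF assms] M_nonneg by (meson mult_left_mono order_trans)
qed

lemma sep:
  assumes "\<alpha> \<in> C" "\<beta> \<in> C" "\<forall>i<n. \<alpha> i = \<beta> i" "\<alpha> n \<noteq> \<beta> n"
  shows "c0 * (1/q) ^ lw (map \<alpha> [0..<n]) \<le> \<bar>p \<alpha> - p \<beta>\<bar>"
proof -
  have "c0 * (1/q) ^ lw (map \<alpha> [0..<n]) \<le> \<bar>p (pre (map \<alpha> [0..<n]) (\<lambda>i. \<alpha> (i + n))) - p (pre (map \<alpha> [0..<n]) (\<lambda>i. \<beta> (i + n)))\<bar>"
    using assms by (intro sep_word C_take C_shift) auto
  moreover have "pre (map \<alpha> [0..<n]) (\<lambda>i. \<beta> (i + n)) = \<beta>"
  proof -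
    have e: "map \<alpha> [0..<n] = map \<beta> [0..<n]" using assms(3) by (intro map_cong) auto
    show ?thesis unfolding e by (rule pre_take)
  qed
  ultimately show ?thesis by (simp add: pre_take)
qed

lemma first_diff:
  fixes \<alpha> \<beta> :: "nat \<Rightarrow> nat"
  assumes "\<alpha> \<noteq> \<beta>"
  obtains n where "\<forall>i<n. \<alpha> i = \<beta> i" "\<alpha> n \<noteq> \<beta> n"
proof -
  have "\<exists>n. \<alpha> n \<noteq> \<beta> n" using assms by auto
  define n where "n = (LEAST n. \<alpha> n \<noteq> \<beta> n)"
  have ex: "\<exists>n. \<alpha> n \<noteq> \<beta> n" using assms by auto
  have "\<alpha> n \<noteq> \<beta> n" unfolding n_def by (rule LeastI_ex[OF ex])
  moreover have "\<forall>i<n. \<alpha> i = \<beta> i" unfolding n_def using not_less_Least by blast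
  ultimately show ?thesis using that by blast
qed

lemma inj_p: "inj_on p C"
proof (rule inj_onI)
  fix \<alpha> \<beta> assume a: "\<alpha> \<in> C" "\<beta> \<in> C" "p \<alpha> = p \<beta>"
  show "\<alpha> = \<beta>"
  proof (rule ccontr)
    assume "\<alpha> \<noteq> \<beta>"
    then obtain n where "\<forall>i<n. \<alpha> i = \<beta> i" "\<alpha> n \<noteq> \<beta> n" by (rule first_diff)
    from sep[OF a(1,2) this] have "c0 * (1/q) ^ lw (map \<alpha> [0..<n]) \<le> 0" using a(3) by simp
    moreover have "c0 * (1/q) ^ lw (map \<alpha> [0..<n]) > 0" using c0pos q1 by simp
    ultimately show False by simp
  qed
qed

end

context ifs begin

lemma C_PiE: "C = PiE UNIV (\<lambda>_. A)"
  by (auto simp: C_def PiE_def extensional_def)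

lemma compact_C: "compact C"
proof -
  have "compactin (product_topology (\<lambda>i. euclidean) UNIV) (PiE UNIV (\<lambda>_::nat. A))"
    by (simp add: compactin_PiE finite_imp_compact finA)
  then show ?thesis unfolding C_PiE euclidean_product_topology by simp
qed

lemma small_pow: assumes "e > 0" obtains n where "M * (1/q) ^ n < e"
proof -
  have "0 < e / (M + 1)" using assms M_nonneg by simp
  then obtain n where n: "(1/q) ^ n < e / (M + 1)" using real_arch_pow_inv[of "e / (M+1)" "1/q"] q1 by auto
  have "M * (1/q) ^ n \<le> (M + 1) * (1/q) ^ n" using q1 by (intro mult_right_mono) auto
  also have "\<dots> < e" using n M_nonneg by (simp add: field_simps)
  finally show ?thesis using that by blast
qed

lemma cont_p: "continuous_on C p"
  unfolding continuous_on_topological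
proof (intro ballI allI impI)
  fix \<alpha> B assume \<alpha>: "\<alpha> \<in> C" and B: "open B" "p \<alpha> \<in> B"
  obtain e where e: "e > 0" "ball (p \<alpha>) e \<subseteq> B" using B openE by blast
  obtain n where n: "M * (1/q) ^ n < e" using small_pow[OF e(1)] by blast
  define Op where "Op = {f::nat\<Rightarrow>nat. \<forall>i\<in>{..<n}. f (id i) \<in> {\<alpha> i}}"
  have "open Op" unfolding Op_def by (rule product_topology_basis') (auto intro: open_discrete)
  moreover have "\<alpha> \<in> Op" by (auto simp: Op_def)
  moreover have "\<forall>y\<in>C. y \<in> Op \<longrightarrow> p y \<in> B"
  proof (intro ballI impI)
    fix y assume y: "y \<in> C" "y \<in> Op"
    then have "\<forall>i<n. y i = \<alpha> i" by (auto simp: Op_def)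
    from lip_n[OF y(1) \<alpha> this] n have "dist (p y) (p \<alpha>) < e" by (simp add: dist_real_def)
    then show "p y \<in> B" using e(2) by (auto simp: dist_commute)
  qed
  ultimately show "\<exists>A. open A \<and> \<alpha> \<in> A \<and> (\<forall>y\<in>C. y \<in> A \<longrightarrow> p y \<in> B)" by blast
qed

lemma compact_K: "compact K"
  unfolding K_def by (rule compact_continuous_image[OF cont_p compact_C])

lemma self_similar_K: "self_similar K"
  unfolding self_similar_def
proof (intro conjI exI)
  define g where "g = (\<lambda>a. \<lambda>x::real. c a + r a * x)"
  show "compact K" by (rule compact_K)
  show "K \<noteq> {}" by (rule K_ne)
  show "finite (g ` A)" using finA by simp
  show "g ` A \<noteq> {}" using A_ne by simp
  show "\<forall>f\<in>g ` A. similarity_contraction f"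
  proof
    fix f assume "f \<in> g ` A"
    then obtain a where a: "a \<in> A" "f = g a" by auto
    have "(1/q) ^ len a < (1/q) ^ 0" using q1 len1[OF a(1)] by (intro power_strict_decreasing) auto
    then have "\<bar>r a\<bar> < 1" using rabs[OF a(1)] by simp
    moreover have "\<bar>r a\<bar> > 0" using rabs[OF a(1)] q1 by simp
    moreover have "\<forall>x y. dist (f x) (f y) = \<bar>r a\<bar> * dist x y"
      using a(2) by (simp add: g_def dist_real_def abs_mult[symmetric] algebra_simps)
    ultimately show "similarity_contraction f" unfolding similarity_contraction_def by blast
  qed
  show "K = (\<Union>f\<in>g ` A. f ` K)"
  proof
    show "K \<subseteq> (\<Union>f\<in>g ` A. f ` K)"
    proof
      fix x assume "x \<in> K"
      then obtain \<alpha> where \<alpha>: "\<alpha> \<in> C" "x = p \<alpha>" by (auto simp: K_def)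
      have t: "(\<lambda>n. \<alpha> (Suc n)) \<in> C" "\<alpha> 0 \<in> A" using \<alpha> by (auto simp: C_def)
      have "x = g (\<alpha> 0) (p (\<lambda>n. \<alpha> (Suc n)))"
        using shift[of "\<alpha> 0" "\<lambda>n. \<alpha> (Suc n)"] t \<alpha>(2) by (simp add: case_nat_split g_def C_def)
      then show "x \<in> (\<Union>f\<in>g ` A. f ` K)" using t by (auto simp: K_def)
    qed
    show "(\<Union>f\<in>g ` A. f ` K) \<subseteq> K"
    proof
      fix x assume "x \<in> (\<Union>f\<in>g ` A. f ` K)"
      then obtain a \<alpha> where a: "a \<in> A" "\<alpha> \<in> C" "x = g a (p \<alpha>)" by (auto simp: K_def)
      then have "x = p (case_nat a \<alpha>)" using shift[of a \<alpha>] by (simp add: g_def C_def)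
      then show "x \<in> K" using C_cons[OF a(1,2)] by (auto simp: K_def)
    qed
  qed
qed

lemma other_letter: "\<exists>b\<in>A. b \<noteq> a"
proof (rule ccontr)
  assume "\<not> (\<exists>b\<in>A. b \<noteq> a)"
  then have "A \<subseteq> {a}" by auto
  then have "card A \<le> card {a}" by (intro card_mono) auto
  then have "card A \<le> 1" by simp
  then show False using cardA by simp
qed

lemma uncountable_C: "uncountable C"
proof
  assume cC: "countable C"
  define g where "g = from_nat_into C"
  have rg: "range g = C" unfolding g_def by (rule range_from_nat_into[OF C_ne cC])
  obtain a where a: "a \<in> A" using A_ne by auto
  obtain b where b: "b \<in> A" "b \<noteq> a" using other_letter[of a] by auto
  define \<delta> where "\<delta> = (\<lambda>n. if g n n = a then b else a)"
  have "\<delta> \<in> C" using a b by (auto simp: \<delta>_def C_def)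
  then obtain m where "\<delta> = g m" using rg by (metis rangeE)
  then have "\<delta> m = g m m" by simp
  then show False using b by (auto simp: \<delta>_def split: if_splits)
qed

lemma uncountable_K: "uncountable K"
  using uncountable_C countable_image_inj_on[OF _ inj_p] unfolding K_def by blast

lemma perfect_K: "perfect_set K"
  unfolding perfect_set_def
proof (intro conjI ballI)
  show "closed K" using compact_K by (rule compact_imp_closed)
  fix x assume "x \<in> K"
  then obtain \<alpha> where \<alpha>: "\<alpha> \<in> C" "x = p \<alpha>" by (auto simp: K_def)
  show "x islimpt K" unfolding islimpt_approachable
  proof (intro allI impI)
    fix e :: real assume "e > 0"
    then obtain n where n: "M * (1/q) ^ n < e" using small_pow by blast
    obtain b where b: "b \<in> A" "b \<noteq> \<alpha> n" using other_letter by blast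
    define \<beta> where "\<beta> = \<alpha>(n := b)"
    have \<beta>: "\<beta> \<in> C" using \<alpha>(1) b by (auto simp: \<beta>_def C_def)
    have "\<beta> \<noteq> \<alpha>" using b by (auto simp: \<beta>_def fun_eq_iff)
    then have "p \<beta> \<noteq> p \<alpha>" using inj_p \<alpha>(1) \<beta> by (auto dest: inj_onD)
    moreover have "\<bar>p \<beta> - p \<alpha>\<bar> \<le> M * (1/q) ^ n" using lip_n[OF \<beta> \<alpha>(1)] by (auto simp: \<beta>_def)
    ultimately show "\<exists>x'\<in>K. x' \<noteq> x \<and> dist x' x < e"
      using \<beta> n \<alpha>(2) by (intro bexI[of _ "p \<beta>"]) (auto simp: K_def dist_real_def)
  qed
qed

end

fun words :: "nat list \<Rightarrow> nat \<Rightarrow> nat list list" where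
  "words al 0 = [[]]"
| "words al (Suc n) = concat (map (\<lambda>a. map (\<lambda>w. a # w) (words al n)) al)"

lemma words_set: "w \<in> set (words al n) \<Longrightarrow> set w \<subseteq> set al \<and> length w = n"
  by (induction n arbitrary: w) force+

lemma map_upt_Suc_Cons: "map \<alpha> [0..<Suc n] = \<alpha> 0 # map (\<lambda>i. \<alpha> (Suc i)) [0..<n]"
  by (induction n) auto

lemma words_mem: "(\<forall>i. \<alpha> i \<in> set al) \<Longrightarrow> map \<alpha> [0..<n] \<in> set (words al n)"
proof (induction n arbitrary: \<alpha>)
  case 0 then show ?case by simp
next
  case (Suc n)
  have "map (\<lambda>i. \<alpha> (Suc i)) [0..<n] \<in> set (words al n)" using Suc by auto
  then show ?case unfolding map_upt_Suc_Cons using Suc.prems by auto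
qed

lemma sum_list_concat_map: "sum_list (concat (map g al)) = sum_list (map (\<lambda>a. sum_list (g a)) al)"
  by (induction al) auto

lemma words_weight:
  fixes f :: "nat \<Rightarrow> real"
  shows "sum_list (map (\<lambda>w. prod_list (map f w)) (words al n)) = (sum_list (map f al)) ^ n"
proof (induction n)
  case 0 then show ?case by simp
next
  case (Suc n)
  have "sum_list (map (\<lambda>w. prod_list (map f w)) (words al (Suc n)))
     = sum_list (map (\<lambda>a. f a * sum_list (map (\<lambda>w. prod_list (map f w)) (words al n))) al)"
    by (simp add: map_concat sum_list_concat_map o_def sum_list_const_mult)
  also have "\<dots> = sum_list (map f al) * (sum_list (map f al)) ^ n"
    unfolding Suc by (simp add: sum_list_mult_const)
  finally show ?case by simp
qed

context ifs begin

definition al where "al = sorted_list_of_set A"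

lemma set_al: "set al = A" and distinct_al: "distinct al"
  using finA by (auto simp: al_def)

lemma sum_al: "sum_list (map f al) = (\<Sum>a\<in>A. f a)"
  using sum_list_distinct_conv_sum_set[OF distinct_al, of f] set_al by simp

lemma lw_prod: "(1/q) ^ lw w = prod_list (map (\<lambda>a. (1/q) ^ len a) w)"
  by (induction w) (auto simp: lw_def power_add)

lemma lw_prod_powr: "((1/q) ^ lw w) powr s = prod_list (map (\<lambda>a. ((1/q) ^ len a) powr s) w)"
proof (induction w)
  case Nil then show ?case using q1 by (simp add: lw_def)
next
  case (Cons a w)
  have "((1/q) ^ lw (a # w)) = (1/q) ^ len a * (1/q) ^ lw w" by (simp add: lw_def power_add)
  then have "((1/q) ^ lw (a # w)) powr s = ((1/q) ^ len a) powr s * ((1/q) ^ lw w) powr s"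
    using q1 by (simp add: powr_mult)
  then show ?case using Cons by simp
qed

lemma lw_ge_length: "set w \<subseteq> A \<Longrightarrow> lw w \<ge> length w"
proof (induction w)
  case (Cons a w) then show ?case using len1[of a] by (simp add: lw_def)
qed (simp add: lw_def)

lemma word_cyl_sub: "set w \<subseteq> A \<Longrightarrow> p ` pre w ` C \<subseteq> K"
  using C_pre by (auto simp: K_def)

lemma word_cyl_diam:
  assumes "set w \<subseteq> A"
  shows "diameter (p ` pre w ` C) \<le> M * (1/q) ^ lw w"
  using M_nonneg q1 by (intro diameter_le) (auto intro!: lip_word[OF assms] simp: dist_real_def)

lemma K_cover_words: "K \<subseteq> (\<Union>w\<in>set (words al n). p ` pre w ` C)"
proof
  fix x assume "x \<in> K"
  then obtain \<alpha> where \<alpha>: "\<alpha> \<in> C" "x = p \<alpha>" by (auto simp: K_def)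
  have "map \<alpha> [0..<n] \<in> set (words al n)" using \<alpha>(1) set_al by (intro words_mem) (auto simp: C_def)
  moreover have "x \<in> p ` pre (map \<alpha> [0..<n]) ` C"
    using \<alpha> pre_take[of \<alpha> n] C_shift[OF \<alpha>(1), of n] by (metis image_eqI)
  ultimately show "x \<in> (\<Union>w\<in>set (words al n). p ` pre w ` C)" by blast
qed

lemma words_in_A: "w \<in> set (words al n) \<Longrightarrow> set w \<subseteq> A \<and> length w = n"
  using words_set set_al by blast

lemma haus_zero:
  assumes s: "s > 0" and sig: "(\<Sum>a\<in>A. ((1/q) ^ len a) powr s) < 1"
  shows "hausdorff_measure s K = 0"
proof -
  define \<sigma> where "\<sigma> = (\<Sum>a\<in>A. ((1/q) ^ len a) powr s)"
  have \<sigma>0: "\<sigma> \<ge> 0" unfolding \<sigma>_def by (intro sum_nonneg) auto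
  have pre0: "hausdorff_pre s \<delta> K = 0" if \<delta>: "\<delta> > 0" for \<delta>
  proof -
    have eps: "hausdorff_pre s \<delta> K \<le> 0 + ennreal e" if e: "e > 0" for e
    proof -
      obtain n1 where n1: "M * (1/q) ^ n1 < \<delta>" using small_pow[OF \<delta>] by blast
      have "0 < e / (M powr s + 1)" using e by (simp add: add_nonneg_pos)
      then obtain n2 where n2: "\<sigma> ^ n2 < e / (M powr s + 1)" using real_arch_pow_inv[of _ \<sigma>] sig unfolding \<sigma>_def by blast
      define n where "n = max n1 n2"
      have "(1/q) ^ n \<le> (1/q) ^ n1" using q1 by (intro power_decreasing) (auto simp: n_def)
      then have hn1: "M * (1/q) ^ n \<le> \<delta>" using n1 M_nonneg by (meson less_le_not_le mult_left_mono order.trans)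
      have "\<sigma> ^ n \<le> \<sigma> ^ n2" using \<sigma>0 sig unfolding \<sigma>_def by (intro power_decreasing) (auto simp: n_def)
      then have h: "\<sigma> ^ n < e / (M powr s + 1)" using n2 by linarith
      have pos: "M powr s + 1 > 0" using powr_ge_zero[of M s] by linarith
      have "(M powr s + 1) * \<sigma> ^ n < e" using pos_less_divide_eq[OF pos] h by (simp add: mult.commute)
      moreover have "M powr s * \<sigma> ^ n \<le> (M powr s + 1) * \<sigma> ^ n" using \<sigma>0 by (intro mult_right_mono) auto
      ultimately have hn2: "M powr s * \<sigma> ^ n < e" by linarith
      define ws where "ws = words al n"
      define U where "U = (\<lambda>i. if i < length ws then p ` pre (ws ! i) ` C else {})"
      have wsA: "set (ws ! i) \<subseteq> A" "length (ws ! i) = n" if "i < length ws" for i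
        using words_in_A[of "ws ! i" n] that unfolding ws_def by auto
      have Uprop: "\<forall>i. bounded (U i) \<and> diameter (U i) \<le> \<delta>"
      proof
        fix i
        show "bounded (U i) \<and> diameter (U i) \<le> \<delta>"
        proof (cases "i < length ws")
          case True
          have "bounded (U i)" using True word_cyl_sub[OF wsA(1)[OF True]] compact_K
            by (auto simp: U_def intro: bounded_subset compact_imp_bounded)
          moreover have "diameter (U i) \<le> M * (1/q) ^ lw (ws ! i)"
            using True word_cyl_diam[OF wsA(1)[OF True]] by (simp add: U_def)
          moreover have "(1/q) ^ lw (ws ! i) \<le> (1/q) ^ n"
            using q1 lw_ge_length[OF wsA(1)[OF True]] wsA(2)[OF True] by (intro power_decreasing) auto
          ultimately show ?thesis using hn1 M_nonneg by (meson mult_left_mono order.trans)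
        next
          case False then show ?thesis using \<delta> by (simp add: U_def)
        qed
      qed
      have Ucov: "K \<subseteq> (\<Union>i. U i)"
      proof
        fix x assume "x \<in> K"
        then obtain w where w: "w \<in> set ws" "x \<in> p ` pre w ` C" using K_cover_words[of n] unfolding ws_def by blast
        then obtain i where "i < length ws" "ws ! i = w" by (meson in_set_conv_nth)
        then show "x \<in> (\<Union>i. U i)" using w by (auto simp: U_def)
      qed
      have R: "(\<Sum>i<length ws. hdiam s (U i)) \<le> (\<Sum>i<length ws. M powr s * ((1/q) ^ lw (ws ! i)) powr s)"
      proof (intro sum_mono)
        fix i assume "i \<in> {..<length ws}"
        then have i: "i < length ws" by simp
        have "diameter (U i) \<le> M * (1/q) ^ lw (ws ! i)"
          using i word_cyl_diam[OF wsA(1)[OF i]] by (simp add: U_def)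
        moreover have "diameter (U i) \<ge> 0" by (simp add: diameter_ge_0 Uprop)
        ultimately have "diameter (U i) powr s \<le> (M * (1/q) ^ lw (ws ! i)) powr s"
          using s by (intro powr_mono2) auto
        also have "\<dots> = M powr s * ((1/q) ^ lw (ws ! i)) powr s"
          using M_nonneg q1 by (simp add: powr_mult)
        finally show "hdiam s (U i) \<le> M powr s * ((1/q) ^ lw (ws ! i)) powr s"
          using s M_nonneg by (auto simp: hdiam_def)
      qed
      also have "(\<Sum>i<length ws. M powr s * ((1/q) ^ lw (ws ! i)) powr s)
          = M powr s * sum_list (map (\<lambda>w. ((1/q) ^ lw w) powr s) ws)"
        by (simp add: sum_distrib_left sum_list_sum_nth atLeast0LessThan)
      also have "sum_list (map (\<lambda>w. ((1/q) ^ lw w) powr s) ws) = \<sigma> ^ n"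
        unfolding lw_prod_powr ws_def words_weight sum_al \<sigma>_def ..
      finally have R2: "(\<Sum>i<length ws. hdiam s (U i)) \<le> M powr s * \<sigma> ^ n" .
      have "hausdorff_pre s \<delta> K \<le> (\<Sum>i. ennreal (hdiam s (U i)))"
        unfolding hausdorff_pre_def using Uprop Ucov by (intro INF_lower) auto
      also have "(\<Sum>i. ennreal (hdiam s (U i))) = (\<Sum>i<length ws. ennreal (hdiam s (U i)))"
        by (intro suminf_finite) (auto simp: U_def hdiam_def)
      also have "\<dots> = ennreal (\<Sum>i<length ws. hdiam s (U i))"
        by (intro sum_ennreal) (auto simp: hdiam_def)
      also have "\<dots> \<le> ennreal (M powr s * \<sigma> ^ n)" using R2 by (rule ennreal_leI)
      finally have "hausdorff_pre s \<delta> K \<le> ennreal (M powr s * \<sigma> ^ n)" .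
      also have "\<dots> \<le> ennreal e" using hn2 by (intro ennreal_leI) linarith
      finally show ?thesis by (simp only: add_0)
    qed
    have "hausdorff_pre s \<delta> K \<le> 0" by (rule ennreal_le_epsilon) (rule eps)
    then show ?thesis by simp
  qed
  show ?thesis unfolding hausdorff_measure_def using pre0 by simp
qed

end

context ifs begin

lemma emeasure_K_le:
  "emeasure lborel K \<le> ennreal (2 * M * (\<Sum>a\<in>A. (1/q) ^ len a) ^ n)"
proof -
  obtain \<alpha>0 where \<alpha>0: "\<alpha>0 \<in> C" using C_ne by auto
  define ws where "ws = words al n"
  have wsA: "set (ws ! i) \<subseteq> A" if "i < length ws" for i
    using words_in_A[of "ws ! i" n] that unfolding ws_def by auto
  define I where "I = (\<lambda>i. {p (pre (ws ! i) \<alpha>0) - M * (1/q) ^ lw (ws ! i) .. p (pre (ws ! i) \<alpha>0) + M * (1/q) ^ lw (ws ! i)})"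
  have cov: "K \<subseteq> (\<Union>i\<in>{..<length ws}. I i)"
  proof
    fix x assume "x \<in> K"
    then obtain w where w: "w \<in> set ws" "x \<in> p ` pre w ` C" using K_cover_words[of n] unfolding ws_def by blast
    then obtain i where i: "i < length ws" "ws ! i = w" by (meson in_set_conv_nth)
    obtain \<beta> where \<beta>: "\<beta> \<in> C" "x = p (pre w \<beta>)" using w by auto
    have "\<bar>p (pre w \<beta>) - p (pre w \<alpha>0)\<bar> \<le> M * (1/q) ^ lw w"
      using lip_word[OF _ \<beta>(1) \<alpha>0] wsA[OF i(1)] i(2) by auto
    then have "x \<in> I i" using \<beta>(2) i(2) by (auto simp: I_def abs_le_iff)
    then show "x \<in> (\<Union>i\<in>{..<length ws}. I i)" using i by auto
  qed
  have "emeasure lborel K \<le> emeasure lborel (\<Union>i\<in>{..<length ws}. I i)"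
    using cov by (intro emeasure_mono) (auto simp: I_def)
  also have "\<dots> \<le> (\<Sum>i\<in>{..<length ws}. emeasure lborel (I i))"
    by (intro emeasure_subadditive_finite) (auto simp: I_def)
  also have "\<dots> = (\<Sum>i\<in>{..<length ws}. ennreal (2 * M * (1/q) ^ lw (ws ! i)))"
  proof (intro sum.cong refl)
    fix i
    have "0 \<le> M * (1/q) ^ lw (ws ! i)" using M_nonneg q1 by simp
    then show "emeasure lborel (I i) = ennreal (2 * M * (1/q) ^ lw (ws ! i))"
      unfolding I_def by (subst emeasure_lborel_Icc) (auto simp: algebra_simps)
  qed
  also have "\<dots> = ennreal (\<Sum>i\<in>{..<length ws}. 2 * M * (1/q) ^ lw (ws ! i))"
    using M_nonneg q1 by (intro sum_ennreal) simp
  also have "(\<Sum>i\<in>{..<length ws}. 2 * M * (1/q) ^ lw (ws ! i)) = 2 * M * sum_list (map (\<lambda>w. (1/q) ^ lw w) ws)"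
    by (simp add: sum_distrib_left sum_list_sum_nth atLeast0LessThan)
  also have "sum_list (map (\<lambda>w. (1/q) ^ lw w) ws) = (\<Sum>a\<in>A. (1/q) ^ len a) ^ n"
    unfolding lw_prod ws_def words_weight sum_al ..
  finally show ?thesis .
qed

lemma sets_K: "K \<in> sets lborel"
  using compact_imp_closed[OF compact_K] by (simp add: borel_closed)

lemma K_null_lborel:
  assumes "(\<Sum>a\<in>A. (1/q) ^ len a) < 1"
  shows "emeasure lborel K = 0"
proof -
  define \<tau> where "\<tau> = (\<Sum>a\<in>A. (1/q) ^ len a)"
  have \<tau>0: "\<tau> \<ge> 0" unfolding \<tau>_def using q1 by (intro sum_nonneg) auto
  have eps: "emeasure lborel K \<le> 0 + ennreal e" if e: "e > 0" for e
  proof -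
    have "0 < e / (2 * M + 1)" using e M_nonneg by simp
    then obtain n where n: "\<tau> ^ n < e / (2 * M + 1)" using real_arch_pow_inv[of _ \<tau>] assms unfolding \<tau>_def by blast
    have pos: "2 * M + 1 > 0" using M_nonneg by simp
    have "(2 * M + 1) * \<tau> ^ n < e" using pos_less_divide_eq[OF pos] n by (simp add: mult.commute)
    moreover have "2 * M * \<tau> ^ n \<le> (2 * M + 1) * \<tau> ^ n" using \<tau>0 by (intro mult_right_mono) auto
    ultimately have "2 * M * \<tau> ^ n \<le> e" by linarith
    then have "ennreal (2 * M * \<tau> ^ n) \<le> ennreal e" by (rule ennreal_leI)
    then show ?thesis using emeasure_K_le[of n] unfolding \<tau>_def by simp
  qed
  have "emeasure lborel K \<le> 0" by (rule ennreal_le_epsilon) (rule eps)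
  then show ?thesis by simp
qed

lemma K_null:
  assumes "(\<Sum>a\<in>A. (1/q) ^ len a) < 1"
  shows "K \<in> null_sets lebesgue"
  using K_null_lborel[OF assms] sets_K by (intro null_sets_completionI null_setsI) auto

lemma K_nowhere_dense:
  assumes "(\<Sum>a\<in>A. (1/q) ^ len a) < 1"
  shows "nowhere_dense K"
  unfolding nowhere_dense_def
proof -
  have cl: "closure K = K" using compact_imp_closed[OF compact_K] by simp
  have "x \<notin> interior K" for x
  proof
    assume xi: "x \<in> interior K"
    obtain e where e0: "e > 0" "ball x e \<subseteq> interior K" using openE[OF open_interior xi] by blast
    then have e: "e > 0" "ball x e \<subseteq> K" using interior_subset by blast+
    have "{x - e/2 .. x + e/2} \<subseteq> ball x e" using e(1) by (auto simp: dist_real_def)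
    then have "emeasure lborel {x - e/2 .. x + e/2} \<le> emeasure lborel K"
      using e(2) sets_K by (intro emeasure_mono) auto
    then have "ennreal e \<le> 0" using K_null_lborel[OF assms] e(1) by simp
    then show False using e(1) by simp
  qed
  then show "interior (closure K) = {}" using cl by auto
qed

end

lemma powr_sum_le:
  fixes d \<eta> s :: real assumes "0 \<le> d" "0 \<le> \<eta>" "s > 0"
  shows "(d + \<eta>) powr s \<le> 2 powr s * (d powr s + \<eta> powr s)"
proof -
  have "(d + \<eta>) powr s \<le> (2 * max d \<eta>) powr s"
    using assms by (intro powr_mono2) auto
  also have "\<dots> = 2 powr s * (max d \<eta>) powr s" using assms by (simp add: powr_mult)
  also have "(max d \<eta>) powr s \<le> d powr s + \<eta> powr s"
    by (cases "d \<le> \<eta>") (auto simp: max_def)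
  then have "2 powr s * (max d \<eta>) powr s \<le> 2 powr s * (d powr s + \<eta> powr s)"
    by (intro mult_left_mono) auto
  finally show ?thesis .
qed

context ifs begin

lemma prefix_ok_cons:
  assumes "\<forall>i<length (b # v). case_nat a \<alpha> i = (b # v) ! i"
  shows "b = a" "\<forall>i<length v. \<alpha> i = v ! i"
proof -
  show "b = a" using assms[rule_format, of 0] by simp
  show "\<forall>i<length v. \<alpha> i = v ! i"
  proof (intro allI impI)
    fix i assume "i < length v"
    then show "\<alpha> i = v ! i" using assms[rule_format, of "Suc i"] by simp
  qed
qed

lemma cover_sum:
  fixes \<rho> :: "nat \<Rightarrow> real"
  assumes \<rho>0: "\<And>a. \<rho> a \<ge> 0" and \<rho>1: "(\<Sum>a\<in>A. \<rho> a) \<ge> 1"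
  shows "finite W \<Longrightarrow> (\<forall>w\<in>W. length w \<le> N) \<Longrightarrow> (\<forall>\<alpha>\<in>C. \<exists>w\<in>W. \<forall>i<length w. \<alpha> i = w ! i)
     \<Longrightarrow> (\<Sum>w\<in>W. prod_list (map \<rho> w)) \<ge> 1"
proof (induction N arbitrary: W)
  have g0: "\<And>w. prod_list (map \<rho> w) \<ge> 0" using \<rho>0 by (intro prod_list_nonneg) auto
  {
    fix W :: "nat list set" assume fin: "finite W" and nil: "[] \<in> W"
    have "prod_list (map \<rho> []) \<le> (\<Sum>w\<in>W. prod_list (map \<rho> w))"
      using fin nil g0 by (intro member_le_sum) auto
    then have "(\<Sum>w\<in>W. prod_list (map \<rho> w)) \<ge> 1" by simp
  } note nilcase = this
  case 0
  obtain \<alpha> where "\<alpha> \<in> C" using C_ne by auto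
  then obtain w where "w \<in> W" "\<forall>i<length w. \<alpha> i = w ! i" using 0 by blast
  then have "[] \<in> W" using 0 by auto
  then show ?case using nilcase 0 by blast
next
  case (Suc N)
  have g0: "\<And>w. prod_list (map \<rho> w) \<ge> 0" using \<rho>0 by (intro prod_list_nonneg) auto
  show ?case
  proof (cases "[] \<in> W")
    case True
    have "prod_list (map \<rho> []) \<le> (\<Sum>w\<in>W. prod_list (map \<rho> w))"
      using Suc.prems True g0 by (intro member_le_sum) auto
    then show ?thesis by simp
  next
    case False
    define Wa where "Wa = (\<lambda>a. (Cons a) -` W)"
    have finWa: "finite (Wa a)" for a unfolding Wa_def using Suc.prems(1) by (intro finite_vimageI) (auto simp: inj_def)
    have IHa: "(\<Sum>v\<in>Wa a. prod_list (map \<rho> v)) \<ge> 1" if a: "a \<in> A" for a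
    proof (rule Suc.IH[OF finWa])
      show "\<forall>w\<in>Wa a. length w \<le> N" using Suc.prems(2) by (auto simp: Wa_def)
      show "\<forall>\<alpha>\<in>C. \<exists>w\<in>Wa a. \<forall>i<length w. \<alpha> i = w ! i"
      proof
        fix \<alpha> assume \<alpha>: "\<alpha> \<in> C"
        then have "case_nat a \<alpha> \<in> C" using a by (rule C_cons[rotated])
        then obtain w where w: "w \<in> W" "\<forall>i<length w. case_nat a \<alpha> i = w ! i" using Suc.prems(3) by blast
        then obtain b v where bv: "w = b # v" using False by (cases w) auto
        from prefix_ok_cons[OF w(2)[unfolded bv]] have "b = a" "\<forall>i<length v. \<alpha> i = v ! i" by auto
        then show "\<exists>w\<in>Wa a. \<forall>i<length w. \<alpha> i = w ! i" using w(1) bv by (auto simp: Wa_def)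
      qed
    qed
    define f where "f = (\<lambda>(a::nat, v::nat list). a # v)"
    have inj: "inj_on f (Sigma A Wa)" by (auto simp: f_def inj_on_def)
    have sub: "f ` Sigma A Wa \<subseteq> W" by (auto simp: f_def Wa_def)
    have finS: "finite (Sigma A Wa)" using finA finWa by auto
    have "1 \<le> (\<Sum>a\<in>A. \<rho> a)" by (rule \<rho>1)
    also have "\<dots> \<le> (\<Sum>a\<in>A. \<rho> a * (\<Sum>v\<in>Wa a. prod_list (map \<rho> v)))"
      using IHa \<rho>0 by (intro sum_mono) (metis mult.right_neutral mult_left_mono)
    also have "\<dots> = (\<Sum>(a, v)\<in>Sigma A Wa. prod_list (map \<rho> (a # v)))"
      using finA finWa by (simp add: sum.Sigma sum_distrib_left)
    also have "\<dots> = (\<Sum>w\<in>f ` Sigma A Wa. prod_list (map \<rho> w))"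
      using inj by (simp add: sum.reindex f_def case_prod_beta')
    also have "\<dots> \<le> (\<Sum>w\<in>W. prod_list (map \<rho> w))"
      using sub Suc.prems(1) g0 by (intro sum_mono2) auto
    finally show ?thesis .
  qed
qed

end

context ifs begin

lemma haus_pos:
  assumes s: "s > 0" and sig: "(\<Sum>a\<in>A. ((1/q) ^ len a) powr s) \<ge> 1"
  shows "hausdorff_measure s K \<noteq> 0"
proof -
  define \<kappa> where "\<kappa> = (2 * q ^ L / c0) powr s"
  have \<kappa>pos: "\<kappa> > 0" using c0pos q1 by (simp add: \<kappa>_def)
  define \<epsilon> where "\<epsilon> = 1 / (2 * \<kappa>)"
  have \<epsilon>pos: "\<epsilon> > 0" using \<kappa>pos by (simp add: \<epsilon>_def)
  define \<delta>0 where "\<delta>0 = c0 / 4"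
  define \<rho> where "\<rho> = (\<lambda>a. ((1/q) ^ len a) powr s)"
  have \<rho>0: "\<And>a. \<rho> a \<ge> 0" by (simp add: \<rho>_def)
  have main: "ennreal \<epsilon> \<le> (\<Sum>i. ennreal (hdiam s (U i)))"
    if U: "\<forall>i. bounded (U i) \<and> diameter (U i) \<le> \<delta>0" "K \<subseteq> (\<Union>i. U i)" for U
  proof -
    define d where "d = (\<lambda>i. diameter (U i))"
    define \<eta> where "\<eta> = (\<lambda>i. min ((\<epsilon> / 2 ^ Suc i) powr (1/s)) (c0/4))"
    define d' where "d' = (\<lambda>i. d i + \<eta> i)"
    have d0: "d i \<ge> 0" for i using U(1) by (simp add: d_def diameter_ge_0)
    have dle: "d i \<le> c0/4" for i using U(1) by (simp add: d_def \<delta>0_def)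
    have \<eta>pos: "\<eta> i > 0" for i using \<epsilon>pos c0pos by (simp add: \<eta>_def)
    have \<eta>le: "\<eta> i \<le> c0/4" for i by (simp add: \<eta>_def)
    have d'pos: "d' i > 0" for i using d0 \<eta>pos by (simp add: d'_def add_nonneg_pos)
    have d'c0: "d' i < c0" for i using dle[of i] \<eta>le[of i] c0pos unfolding d'_def by linarith
    define I' where "I' = {i. U i \<inter> K \<noteq> {}}"
    have "\<forall>i\<in>I'. \<exists>\<alpha>\<in>C. p \<alpha> \<in> U i" by (auto simp: I'_def K_def)
    then obtain \<alpha>f where \<alpha>f: "\<And>i. i \<in> I' \<Longrightarrow> \<alpha>f i \<in> C \<and> p (\<alpha>f i) \<in> U i" by metis
    define Nset where "Nset = (\<lambda>i. {n. c0 * (1/q) ^ lw (map (\<alpha>f i) [0..<n]) > d' i})"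
    define nf where "nf = (\<lambda>i. Max (Nset i))"
    have Nfin: "finite (Nset i)" if i: "i \<in> I'" for i
    proof -
      have "0 < d' i / c0" using d'pos c0pos by simp
      then obtain N where N: "(1/q) ^ N < d' i / c0" using real_arch_pow_inv[of "d' i / c0" "1/q"] q1 by auto
      have "Nset i \<subseteq> {..<N}"
      proof
        fix n assume n: "n \<in> Nset i"
        show "n \<in> {..<N}"
        proof (rule ccontr)
          assume "n \<notin> {..<N}"
          then have nN: "N \<le> n" by simp
          have "(1/q) ^ lw (map (\<alpha>f i) [0..<n]) \<le> (1/q) ^ n"
            using q1 lw_take_ge[of "\<alpha>f i" n] \<alpha>f[OF i] by (intro power_decreasing) auto
          also have "\<dots> \<le> (1/q) ^ N" using q1 nN by (intro power_decreasing) auto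
          finally have "c0 * (1/q) ^ lw (map (\<alpha>f i) [0..<n]) \<le> c0 * (1/q) ^ N"
            using c0pos by (intro mult_left_mono) auto
          also have "\<dots> < d' i" using N c0pos by (simp add: field_simps)
          finally show False using n by (simp add: Nset_def)
        qed
      qed
      then show ?thesis using finite_subset by blast
    qed
    have N0: "0 \<in> Nset i" for i using d'c0 by (simp add: Nset_def lw_def)
    have P1: "c0 * (1/q) ^ lw (map (\<alpha>f i) [0..<nf i]) > d' i" if i: "i \<in> I'" for i
    proof -
      have "nf i \<in> Nset i" unfolding nf_def using Nfin[OF i] N0 by (intro Max_in) auto
      then show ?thesis by (simp add: Nset_def)
    qed
    have P2: "c0 * (1/q) ^ lw (map (\<alpha>f i) [0..<Suc (nf i)]) \<le> d' i" if i: "i \<in> I'" for i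
    proof -
      have "Suc (nf i) \<notin> Nset i"
      proof
        assume "Suc (nf i) \<in> Nset i"
        then have "Suc (nf i) \<le> nf i" unfolding nf_def using Nfin[OF i] by (intro Max_ge) auto
        then show False by simp
      qed
      then show ?thesis by (simp add: Nset_def)
    qed
    have P3: "(1/q) ^ lw (map (\<alpha>f i) [0..<nf i]) \<le> q ^ L / c0 * d' i" if i: "i \<in> I'" for i
    proof -
      define l where "l = lw (map (\<alpha>f i) [0..<nf i])"
      have "(1/q) ^ (l + L) \<le> (1/q) ^ lw (map (\<alpha>f i) [0..<Suc (nf i)])"
        using q1 lw_take_Suc_le[of "\<alpha>f i" "nf i"] \<alpha>f[OF i] unfolding l_def by (intro power_decreasing) auto
      then have "c0 * ((1/q) ^ l * (1/q) ^ L) \<le> d' i"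
        using P2[OF i] c0pos by (simp add: power_add) (meson mult_left_mono order.trans less_imp_le)
      then have "c0 * (1/q) ^ l \<le> d' i * q ^ L"
        using q1 by (simp add: power_one_over field_simps)
      then show ?thesis using c0pos unfolding l_def by (simp add: field_simps)
    qed
    define V where "V = (\<lambda>i. ball (p (\<alpha>f i)) (d' i))"
    have KV: "K \<subseteq> (\<Union>i\<in>I'. V i)"
    proof
      fix x assume x: "x \<in> K"
      then obtain i where i: "x \<in> U i" using U(2) by blast
      then have iI: "i \<in> I'" using x by (auto simp: I'_def)
      have "dist x (p (\<alpha>f i)) \<le> d i"
        unfolding d_def using U(1) i \<alpha>f[OF iI] by (intro diameter_bounded_bound) auto
      then have "x \<in> V i" using \<eta>pos[of i] by (simp add: V_def d'_def dist_commute)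
      then show "x \<in> (\<Union>i\<in>I'. V i)" using iI by blast
    qed
    obtain F where F: "F \<subseteq> I'" "finite F" "K \<subseteq> (\<Union>i\<in>F. V i)"
      using compactE_image[OF compact_K, of I' V] KV by (auto simp: V_def)
    define wf where "wf = (\<lambda>i. map (\<alpha>f i) [0..<nf i])"
    define W where "W = wf ` F"
    have covW: "\<forall>\<beta>\<in>C. \<exists>w\<in>W. \<forall>j<length w. \<beta> j = w ! j"
    proof
      fix \<beta> assume \<beta>: "\<beta> \<in> C"
      then have "p \<beta> \<in> K" by (auto simp: K_def)
      then obtain i where i: "i \<in> F" "p \<beta> \<in> V i" using F(3) by blast
      have iI: "i \<in> I'" using i F(1) by blast
      have agree: "\<forall>j<nf i. \<alpha>f i j = \<beta> j"
      proof (rule ccontr)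
        assume na: "\<not> (\<forall>j<nf i. \<alpha>f i j = \<beta> j)"
        then have "\<alpha>f i \<noteq> \<beta>" by auto
        then obtain m where m: "\<forall>j<m. \<alpha>f i j = \<beta> j" "\<alpha>f i m \<noteq> \<beta> m" by (rule first_diff)
        have mn: "m < nf i" using m na by (meson not_less order.strict_trans2)
        have "c0 * (1/q) ^ lw (map (\<alpha>f i) [0..<m]) \<le> \<bar>p (\<alpha>f i) - p \<beta>\<bar>"
          using sep[OF _ \<beta> m] \<alpha>f[OF iI] by auto
        also have "\<dots> < d' i" using i(2) by (simp add: V_def dist_real_def)
        finally have lt: "c0 * (1/q) ^ lw (map (\<alpha>f i) [0..<m]) < d' i" .
        have "(1/q) ^ lw (map (\<alpha>f i) [0..<nf i]) \<le> (1/q) ^ lw (map (\<alpha>f i) [0..<m])"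
          using q1 mn by (intro power_decreasing lw_take_mono) auto
        then have "c0 * (1/q) ^ lw (map (\<alpha>f i) [0..<nf i]) \<le> c0 * (1/q) ^ lw (map (\<alpha>f i) [0..<m])"
          using c0pos by (intro mult_left_mono) auto
        then show False using lt P1[OF iI] by linarith
      qed
      show "\<exists>w\<in>W. \<forall>j<length w. \<beta> j = w ! j"
        using agree i(1) by (intro bexI[of _ "wf i"]) (auto simp: W_def wf_def)
    qed
    have finW: "finite W" using F(2) by (simp add: W_def)
    have lenW: "\<forall>w\<in>W. length w \<le> (\<Sum>i\<in>F. nf i)"
      using F(2) by (auto simp: W_def wf_def intro: member_le_sum)
    have "1 \<le> (\<Sum>w\<in>W. prod_list (map \<rho> w))"
      using cover_sum[OF \<rho>0 _ finW lenW covW] sig by (simp add: \<rho>_def)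
    also have "\<dots> \<le> (\<Sum>i\<in>F. prod_list (map \<rho> (wf i)))"
      unfolding W_def using F(2) \<rho>0 by (intro sum_image_le[simplified comp_def]) (auto intro!: prod_list_nonneg)
    also have "\<dots> \<le> (\<Sum>i\<in>F. \<kappa> * (d i powr s + \<epsilon> / 2 ^ Suc i))"
    proof (intro sum_mono)
      fix i assume iF: "i \<in> F"
      then have iI: "i \<in> I'" using F(1) by blast
      have "prod_list (map \<rho> (wf i)) = ((1/q) ^ lw (wf i)) powr s"
        unfolding \<rho>_def lw_prod_powr ..
      also have "\<dots> \<le> (q ^ L / c0 * d' i) powr s"
        using P3[OF iI] s q1 by (intro powr_mono2) (auto simp: wf_def)
      also have "\<dots> = (q ^ L / c0) powr s * (d i + \<eta> i) powr s"
        unfolding d'_def using q1 c0pos d'pos[of i] by (intro powr_mult; simp add: d'_def)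
      also have "\<dots> \<le> (q ^ L / c0) powr s * (2 powr s * (d i powr s + \<eta> i powr s))"
        using powr_sum_le[OF d0 less_imp_le[OF \<eta>pos] s] by (intro mult_left_mono) auto
      also have "\<dots> = \<kappa> * (d i powr s + \<eta> i powr s)"
        using q1 c0pos by (simp add: \<kappa>_def powr_mult[symmetric] mult.commute)
      also have "\<eta> i powr s \<le> \<epsilon> / 2 ^ Suc i"
      proof -
        have "\<eta> i powr s \<le> ((\<epsilon> / 2 ^ Suc i) powr (1/s)) powr s"
          using \<eta>pos[of i] s by (intro powr_mono2) (auto simp: \<eta>_def)
        also have "\<dots> = \<epsilon> / 2 ^ Suc i" using s \<epsilon>pos by (simp add: powr_powr)
        finally show ?thesis .
      qed
      then have "\<kappa> * (d i powr s + \<eta> i powr s) \<le> \<kappa> * (d i powr s + \<epsilon> / 2 ^ Suc i)"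
        using \<kappa>pos by (intro mult_left_mono) auto
      finally show "prod_list (map \<rho> (wf i)) \<le> \<kappa> * (d i powr s + \<epsilon> / 2 ^ Suc i)" .
    qed
    also have "\<dots> = \<kappa> * (\<Sum>i\<in>F. d i powr s) + \<kappa> * (\<Sum>i\<in>F. \<epsilon> / 2 ^ Suc i)"
      by (simp add: sum_distrib_left sum.distrib algebra_simps)
    also have "(\<Sum>i\<in>F. \<epsilon> / 2 ^ Suc i) \<le> \<epsilon>"
    proof -
      have "(\<Sum>i\<in>F. \<epsilon> * (1/2) ^ Suc i) \<le> (\<Sum>i. \<epsilon> * (1/2) ^ Suc i)"
        using F(2) power_half_series \<epsilon>pos by (intro sum_le_suminf summable_mult) (auto simp: sums_iff)
      also have "\<dots> = \<epsilon>"
        using suminf_mult[OF sums_summable[OF power_half_series], of \<epsilon>] sums_unique[OF power_half_series] by (simp only: mult_1_right)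
      finally show ?thesis by (simp add: power_one_over)
    qed
    then have "\<kappa> * (\<Sum>i\<in>F. d i powr s) + \<kappa> * (\<Sum>i\<in>F. \<epsilon> / 2 ^ Suc i) \<le> \<kappa> * (\<Sum>i\<in>F. d i powr s) + \<kappa> * \<epsilon>"
      using \<kappa>pos by simp
    finally have "1 \<le> \<kappa> * (\<Sum>i\<in>F. d i powr s) + \<kappa> * \<epsilon>" .
    moreover have "\<kappa> * \<epsilon> = 1/2" using \<kappa>pos by (simp add: \<epsilon>_def)
    ultimately have "\<kappa> * (\<Sum>i\<in>F. d i powr s) \<ge> 1/2" by linarith
    then have sumd: "(\<Sum>i\<in>F. d i powr s) \<ge> \<epsilon>" using \<kappa>pos by (simp add: \<epsilon>_def field_simps)
    have hd: "hdiam s (U i) = d i powr s" if "i \<in> F" for i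
      using that F(1) s by (auto simp: hdiam_def d_def I'_def)
    have "ennreal \<epsilon> \<le> ennreal (\<Sum>i\<in>F. hdiam s (U i))"
      using sumd hd by (intro ennreal_leI) simp
    also have "\<dots> = (\<Sum>i\<in>F. ennreal (hdiam s (U i)))"
      by (intro sum_ennreal[symmetric]) (auto simp: hdiam_def)
    also have "\<dots> \<le> (\<Sum>i. ennreal (hdiam s (U i)))"
      using F(2) by (intro sum_le_suminf) auto
    finally show ?thesis .
  qed
  have "ennreal \<epsilon> \<le> hausdorff_pre s \<delta>0 K"
    unfolding hausdorff_pre_def using main by (intro INF_greatest) auto
  also have "\<dots> \<le> hausdorff_measure s K"
    unfolding hausdorff_measure_def using c0pos by (intro SUP_upper) (auto simp: \<delta>0_def)
  finally show ?thesis using \<epsilon>pos by auto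
qed

end

context ifs begin

lemma base_lt1: "a \<in> A \<Longrightarrow> 0 < (1/q) ^ len a \<and> (1/q) ^ len a < 1"
proof -
  assume a: "a \<in> A"
  have "(1/q) ^ len a < (1/q) ^ 0" using q1 len1[OF a] by (intro power_strict_decreasing) auto
  then show ?thesis using q1 by simp
qed

lemma haus0: "hausdorff_measure 0 K \<noteq> 0"
proof -
  have main: "ennreal 1 \<le> (\<Sum>i. ennreal (hdiam 0 (U i)))" if U: "K \<subseteq> (\<Union>i. U i)" for U
  proof -
    obtain x where "x \<in> K" using K_ne by auto
    then obtain i where i: "x \<in> U i" using U by blast
    then have "hdiam 0 (U i) = 1" by (auto simp: hdiam_def)
    then have "ennreal 1 = (\<Sum>j\<in>{i}. ennreal (hdiam 0 (U j)))" by simp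
    also have "\<dots> \<le> (\<Sum>j. ennreal (hdiam 0 (U j)))" by (intro sum_le_suminf) auto
    finally show ?thesis .
  qed
  have "ennreal 1 \<le> hausdorff_pre 0 1 K"
    unfolding hausdorff_pre_def using main by (intro INF_greatest) auto
  also have "\<dots> \<le> hausdorff_measure 0 K"
    unfolding hausdorff_measure_def by (intro SUP_upper) auto
  finally show ?thesis by auto
qed

lemma dim_K:
  assumes s0: "s0 > 0" and eq: "(\<Sum>a\<in>A. ((1/q) ^ len a) powr s0) = 1"
  shows "hausdorff_dim K = s0"
proof -
  define Z where "Z = {s. s \<ge> 0 \<and> hausdorff_measure s K = 0}"
  have up: "s \<in> Z" if s: "s > s0" for s
  proof -
    have "(\<Sum>a\<in>A. ((1/q) ^ len a) powr s) < (\<Sum>a\<in>A. ((1/q) ^ len a) powr s0)"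
      using finA A_ne s base_lt1 by (intro sum_strict_mono powr_less_mono') auto
    then show ?thesis using haus_zero[of s] s s0 eq by (auto simp: Z_def)
  qed
  have low: "s \<ge> s0" if s: "s \<in> Z" for s
  proof (rule ccontr)
    assume "\<not> s \<ge> s0"
    then have lt: "s < s0" by simp
    show False
    proof (cases "s = 0")
      case True then show False using haus0 s by (auto simp: Z_def)
    next
      case False
      then have sp: "s > 0" using s by (auto simp: Z_def)
      have "(\<Sum>a\<in>A. ((1/q) ^ len a) powr s0) < (\<Sum>a\<in>A. ((1/q) ^ len a) powr s)"
        using finA A_ne lt base_lt1 by (intro sum_strict_mono powr_less_mono') auto
      then show False using haus_pos[OF sp] s eq by (auto simp: Z_def)
    qed
  qed
  have ne: "s0 + 1 \<in> Z" using up by simp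
  have bdd: "bdd_below Z" using low by (auto simp: bdd_below_def)
  have g: "Inf Z \<ge> s0" using ne low by (intro cInf_greatest) auto
  have le: "Inf Z \<le> s0 + e" if e: "e > 0" for e
  proof -
    have "s0 + e \<in> Z" using up[of "s0 + e"] e by simp
    then show ?thesis using bdd by (rule cInf_lower)
  qed
  have "Inf Z \<le> s0" by (rule field_le_epsilon) (rule le)
  with g show ?thesis unfolding hausdorff_dim_def Z_def[symmetric] by simp
qed

end

lemma Theta_sub: "a \<in> Theta q u \<Longrightarrow> 1 \<le> a \<and> a \<le> q - 1"
  by (auto simp: Theta_def)

lemma finite_Theta: "finite (Theta q u)" by (simp add: Theta_def)

lemma card_Theta: assumes "q > 3" shows "card (Theta q u) \<ge> 2"
proof -
  obtain x y where xy: "x \<in> Theta q u" "y \<in> Theta q u" "x \<noteq> y"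
  proof (cases "u = 1")
    case True then show ?thesis using that[of 2 3] assms by (auto simp: Theta_def)
  next
    case F1: False
    show ?thesis
    proof (cases "u = 2")
      case True then show ?thesis using that[of 1 3] assms by (auto simp: Theta_def)
    next
      case False then show ?thesis using that[of 1 2] assms F1 by (auto simp: Theta_def)
    qed
  qed
  have "card {x, y} \<le> card (Theta q u)" using xy finite_Theta by (intro card_mono) auto
  then show ?thesis using xy by simp
qed

lemma dig_Theta: "\<forall>n. \<alpha> n \<in> Theta q u \<Longrightarrow> dig q \<alpha>"
  unfolding dig_def
proof
  fix k assume "\<forall>n. \<alpha> n \<in> Theta q u"
  then have "\<alpha> k \<in> Theta q u" by blast
  then show "\<alpha> k \<le> q - 1" by (simp add: Theta_def)
qed

lemma E_ifs:
  assumes q: "q > 3"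
  shows "ifs (Theta q u) (\<lambda>_. 1) (real q) (negaq q) (\<lambda>a. real a / (- real q)) (\<lambda>a. 1 / (- real q)) (2 / real q ^ 5) 1"
proof
  show "finite (Theta q u)" by (rule finite_Theta)
  show "card (Theta q u) \<ge> 2" using card_Theta[OF q] .
  show "real q > 1" using q by simp
  show "1 \<le> (1::nat)" by simp
  show "\<bar>1 / - real q\<bar> = (1 / real q) ^ 1" by simp
  show "0 < 2 / real q ^ 5" using q by simp
  fix a :: nat and \<alpha> :: "nat \<Rightarrow> nat" assume a: "a \<in> Theta q u" and \<alpha>: "\<forall>n. \<alpha> n \<in> Theta q u"
  have "\<forall>n. case_nat a \<alpha> n \<in> Theta q u" using a \<alpha> by (auto split: nat.split)
  then have dg: "dig q (case_nat a \<alpha>)" by (rule dig_Theta)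
  show "negaq q (case_nat a \<alpha>) = real a / - real q + 1 / - real q * negaq q \<alpha>"
    using negaq_split[OF _ dg, of 1] q by simp
next
  fix \<alpha> \<beta> :: "nat \<Rightarrow> nat" assume \<alpha>: "\<forall>n. \<alpha> n \<in> Theta q u" and \<beta>: "\<forall>n. \<beta> n \<in> Theta q u"
  show "\<bar>negaq q \<alpha> - negaq q \<beta>\<bar> \<le> 1"
    using negaq_dist_le[of q \<alpha> \<beta>] dig_Theta[OF \<alpha>] dig_Theta[OF \<beta>] q by simp
  assume ne: "\<alpha> 0 \<noteq> \<beta> 0"
  have hv: "hav q (\<lambda>j. \<gamma> (j + Suc 0))" and lv: "lav q (\<lambda>j. \<gamma> (j + Suc 0))" if "\<forall>n. \<gamma> n \<in> Theta q u" for \<gamma> :: "nat \<Rightarrow> nat"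
  proof -
    have "\<gamma> 1 \<ge> 1" "\<gamma> 2 \<ge> 1" using that Theta_sub by blast+
    then show "hav q (\<lambda>j. \<gamma> (j + Suc 0))"
      unfolding hav_def by (auto intro!: exI[of _ 0] simp: hpat_def)
    show "lav q (\<lambda>j. \<gamma> (j + Suc 0))"
      using \<open>\<gamma> 2 \<ge> 1\<close> unfolding lav_def by (auto intro!: exI[of _ 1] simp: lpat_def eval_nat_numeral)
  qed
  have "2 / real q ^ 4 * (1 / real q) ^ Suc 0 \<le> \<bar>negaq q \<alpha> - negaq q \<beta>\<bar>"
    using q by (intro negaq_sep dig_Theta[OF \<alpha>] dig_Theta[OF \<beta>] ne hv[OF \<alpha>] lv[OF \<alpha>] hv[OF \<beta>] lv[OF \<beta>]) auto
  then show "2 / real q ^ 5 \<le> \<bar>negaq q \<alpha> - negaq q \<beta>\<bar>"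
    by (simp add: power_Suc field_simps eval_nat_numeral)
qed


lemma psum_cons: "psum (case_nat a \<alpha>) (Suc n) = a + psum \<alpha> n"
  unfolding psum_def by (subst sum.lessThan_Suc_shift) simp

lemma psum_Suc: "psum \<alpha> (Suc n) = psum \<alpha> n + \<alpha> n"
  unfolding psum_def by simp

lemma psum_inj:
  assumes pos: "\<forall>n. \<alpha> n \<ge> 1" and eq: "psum \<alpha> (Suc m) = psum \<alpha> (Suc n)"
  shows "m = n"
proof -
  have "strict_mono (\<lambda>n. psum \<alpha> (Suc n))"
    by (rule strict_mono_Suc_iff[THEN iffD2]) (use pos in \<open>auto simp: psum_Suc[of _ "Suc _"] intro: less_le_trans\<close>)
  then show ?thesis using eq strict_mono_eq by blast
qed

lemma bd_hit:
  assumes pos: "\<forall>n. \<alpha> n \<ge> 1" and h: "Suc k = psum \<alpha> (Suc n)"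
  shows "blockdigits u \<alpha> k = \<alpha> n"
proof -
  have "(THE m. Suc k = psum \<alpha> (Suc m)) = n"
    using h psum_inj[OF pos] by (intro the_equality) auto
  then show ?thesis using h unfolding blockdigits_def by auto
qed

lemma bd_miss:
  assumes "\<forall>n. Suc k \<noteq> psum \<alpha> (Suc n)"
  shows "blockdigits u \<alpha> k = u"
  using assms unfolding blockdigits_def by auto

lemma bd_cons:
  assumes a: "a \<ge> 1" and pos: "\<forall>n. \<alpha> n \<ge> 1"
  shows "blockdigits u (case_nat a \<alpha>) k =
          (if k < a then (if k = a - 1 then a else u) else blockdigits u \<alpha> (k - a))"
proof -
  define \<beta> where "\<beta> = case_nat a \<alpha>"
  have posb: "\<forall>n. \<beta> n \<ge> 1" using a pos by (auto simp: \<beta>_def split: nat.split)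
  have pb: "psum \<beta> (Suc n) = a + psum \<alpha> n" for n unfolding \<beta>_def by (rule psum_cons)
  show ?thesis
  proof (cases "k < a")
    case True
    show ?thesis
    proof (cases "k = a - 1")
      case True
      then have "Suc k = psum \<beta> (Suc 0)" using a by (simp add: psum_def \<beta>_def)
      then have "blockdigits u \<beta> k = \<beta> 0" by (rule bd_hit[OF posb])
      then show ?thesis using True \<open>k < a\<close> by (simp add: \<beta>_def)
    next
      case False
      then have "\<forall>n. Suc k \<noteq> psum \<beta> (Suc n)" using \<open>k < a\<close> by (auto simp: pb)
      then show ?thesis using bd_miss False \<open>k < a\<close> by (simp add: \<beta>_def)
    qed
  next
    case False
    show ?thesis
    proof (cases "\<exists>n. Suc (k - a) = psum \<alpha> (Suc n)")
      case True
      then obtain n where n: "Suc (k - a) = psum \<alpha> (Suc n)" by blast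
      have "Suc k = psum \<beta> (Suc (Suc n))" using n False by (simp add: pb)
      then have "blockdigits u \<beta> k = \<beta> (Suc n)" by (rule bd_hit[OF posb])
      moreover have "blockdigits u \<alpha> (k - a) = \<alpha> n" using bd_hit[OF pos n] .
      ultimately show ?thesis using False by (simp add: \<beta>_def)
    next
      case nex: False
      have "\<forall>n. Suc k \<noteq> psum \<beta> (Suc n)"
      proof
        fix n show "Suc k \<noteq> psum \<beta> (Suc n)"
        proof (cases n)
          case 0 then show ?thesis using False by (simp add: psum_def \<beta>_def)
        next
          case (Suc m)
          show ?thesis
          proof
            assume "Suc k = psum \<beta> (Suc n)"
            then have "Suc k = a + psum \<alpha> (Suc m)" using Suc by (simp add: pb)
            then have "Suc (k - a) = psum \<alpha> (Suc m)" using False by linarith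
            then show False using nex by blast
          qed
        qed
      qed
      then have "blockdigits u \<beta> k = u" by (rule bd_miss)
      moreover have "blockdigits u \<alpha> (k - a) = u" using nex by (intro bd_miss) auto
      ultimately show ?thesis using False by (simp add: \<beta>_def)
    qed
  qed
qed

definition block :: "nat \<Rightarrow> nat \<Rightarrow> nat list" where
  "block u a = replicate (a - 1) u @ [a]"

lemma bd_pre:
  assumes a: "a \<ge> 1" and pos: "\<forall>n. \<alpha> n \<ge> 1"
  shows "blockdigits u (case_nat a \<alpha>) = pre (block u a) (blockdigits u \<alpha>)"
proof
  fix k
  have len: "length (block u a) = a" using a by (simp add: block_def)
  show "blockdigits u (case_nat a \<alpha>) k = pre (block u a) (blockdigits u \<alpha>) k"
    unfolding bd_cons[OF a pos] pre_def len
    using a by (auto simp: block_def nth_append)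
qed

lemma bd_range:
  assumes "\<forall>n. \<alpha> n \<in> Theta q u"
  shows "blockdigits u \<alpha> k \<in> insert u (Theta q u)"
  using assms unfolding blockdigits_def by auto

lemma bd_dig:
  assumes "\<forall>n. \<alpha> n \<in> Theta q u" "u < q"
  shows "dig q (blockdigits u \<alpha>)"
  unfolding dig_def
proof
  fix k
  have "blockdigits u \<alpha> k \<in> insert u (Theta q u)" using bd_range[OF assms(1)] .
  then show "blockdigits u \<alpha> k \<le> q - 1" using assms(2) by (auto simp: Theta_def)
qed

lemma Theta_pos: "\<forall>n. \<alpha> n \<in> Theta q u \<Longrightarrow> \<forall>n. \<alpha> n \<ge> 1"
  by (auto simp: Theta_def)

lemma bd_struct0:
  assumes q: "q > 3"
  shows "\<forall>\<alpha>. (\<forall>n. \<alpha> n \<in> Theta q 0) \<longrightarrow> blockdigits 0 \<alpha> k = q - 1 \<longrightarrow>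
           (k \<ge> q - 2 \<and> (\<forall>j. k - (q - 2) \<le> j \<and> j < k \<longrightarrow> blockdigits 0 \<alpha> j = 0))"
proof (induction k rule: less_induct)
  case (less k)
  show ?case
  proof (intro allI impI)
    fix \<alpha> :: "nat \<Rightarrow> nat" assume \<alpha>: "\<forall>n. \<alpha> n \<in> Theta q 0" and dk: "blockdigits 0 \<alpha> k = q - 1"
    define a where "a = \<alpha> 0"
    define \<alpha>' where "\<alpha>' = (\<lambda>n. \<alpha> (Suc n))"
    have a1: "a \<ge> 1" using \<alpha> by (auto simp: a_def Theta_def)
    have \<alpha>'T: "\<forall>n. \<alpha>' n \<in> Theta q 0" using \<alpha> by (auto simp: \<alpha>'_def)
    have pos: "\<forall>n. \<alpha>' n \<ge> 1" using Theta_pos[OF \<alpha>'T] .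
    have eq: "\<alpha> = case_nat a \<alpha>'" unfolding a_def \<alpha>'_def by (rule case_nat_split[symmetric])
    have bdf: "blockdigits 0 \<alpha> j = (if j < a then (if j = a - 1 then a else 0) else blockdigits 0 \<alpha>' (j - a))" for j
      unfolding eq by (rule bd_cons[OF a1 pos])
    show "k \<ge> q - 2 \<and> (\<forall>j. k - (q - 2) \<le> j \<and> j < k \<longrightarrow> blockdigits 0 \<alpha> j = 0)"
    proof (cases "k < a")
      case True
      then have ka: "k = a - 1" "a = q - 1" using dk q bdf[of k] by (auto split: if_splits)
      show ?thesis using ka bdf q by auto
    next
      case False
      then have d': "blockdigits 0 \<alpha>' (k - a) = q - 1" using dk bdf[of k] by simp
      have "k - a < k" using False a1 by simp
      from less[OF this, rule_format, OF \<alpha>'T[rule_format] d']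
      have ih: "k - a \<ge> q - 2" "\<forall>j. k - a - (q - 2) \<le> j \<and> j < k - a \<longrightarrow> blockdigits 0 \<alpha>' j = 0" by auto
      show ?thesis
      proof (intro conjI allI impI)
        show "k \<ge> q - 2" using ih(1) by simp
        fix j assume j: "k - (q - 2) \<le> j \<and> j < k"
        then have "j \<ge> a" using ih(1) False by linarith
        then have "blockdigits 0 \<alpha> j = blockdigits 0 \<alpha>' (j - a)" using bdf[of j] by simp
        also have "\<dots> = 0" using ih(2) j \<open>j \<ge> a\<close> False by (intro ih(2)[rule_format]) linarith
        finally show "blockdigits 0 \<alpha> j = 0" .
      qed
    qed
  qed
qed

lemma bd_avoid:
  assumes q: "q > 3" and u: "u < q" and \<alpha>: "\<forall>n. \<alpha> n \<in> Theta q u"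
  shows "hav q (\<lambda>j. blockdigits u \<alpha> (j + m)) \<and> lav q (\<lambda>j. blockdigits u \<alpha> (j + m))"
proof (cases "u = 0")
  case False
  have ge1: "blockdigits u \<alpha> k \<ge> 1" for k using bd_range[OF \<alpha>, of k] False by (auto simp: Theta_def)
  have "hav q (\<lambda>j. blockdigits u \<alpha> (j + m))"
    unfolding hav_def using ge1[of m] by (intro exI[of _ 0]) (auto simp: hpat_def)
  moreover have "lav q (\<lambda>j. blockdigits u \<alpha> (j + m))"
    unfolding lav_def using ge1[of "Suc m"] by (intro exI[of _ 1]) (auto simp: lpat_def)
  ultimately show ?thesis ..
next
  case True
  note st = bd_struct0[OF q, rule_format, of \<alpha>]
  have \<alpha>0: "\<forall>n. \<alpha> n \<in> Theta q 0" using \<alpha> True by simp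
  have "hav q (\<lambda>j. blockdigits u \<alpha> (j + m))"
  proof (rule ccontr)
    assume "\<not> ?thesis"
    then have h: "\<forall>j<4. blockdigits 0 \<alpha> (j + m) = hpat q j" using True by (auto simp: hav_def)
    have "blockdigits 0 \<alpha> (3 + m) = q - 1" using h[rule_format, of 3] by (simp add: hpat_def)
    from st[OF \<alpha>0[rule_format] this] have "blockdigits 0 \<alpha> (1 + m) = 0" using q by auto
    moreover have "blockdigits 0 \<alpha> (1 + m) = q - 1" using h[rule_format, of 1] by (simp add: hpat_def)
    ultimately show False using q by simp
  qed
  moreover have "lav q (\<lambda>j. blockdigits u \<alpha> (j + m))"
  proof (rule ccontr)
    assume "\<not> ?thesis"
    then have h: "\<forall>j<4. blockdigits 0 \<alpha> (j + m) = lpat q j" using True by (auto simp: lav_def)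
    have "blockdigits 0 \<alpha> (2 + m) = q - 1" using h[rule_format, of 2] by (simp add: lpat_def)
    from st[OF \<alpha>0[rule_format] this] have "blockdigits 0 \<alpha> (0 + m) = 0" using q by auto
    moreover have "blockdigits 0 \<alpha> (0 + m) = q - 1" using h[rule_format, of 0] by (simp add: lpat_def)
    ultimately show False using q by simp
  qed
  ultimately show ?thesis ..
qed


lemma D_sep_lt:
  assumes q: "q > 3" and u: "u < q" and \<alpha>: "\<forall>n. \<alpha> n \<in> Theta q u" and \<beta>: "\<forall>n. \<beta> n \<in> Theta q u"
    and lt: "\<alpha> 0 < \<beta> 0"
  shows "2 / real q ^ 4 * (1 / real q) ^ (q - 1) \<le> \<bar>negaq q (blockdigits u \<alpha>) - negaq q (blockdigits u \<beta>)\<bar>"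
proof -
  define a where "a = \<alpha> 0"
  define b where "b = \<beta> 0"
  have aT: "a \<in> Theta q u" and bT: "b \<in> Theta q u" using \<alpha> \<beta> by (auto simp: a_def b_def)
  have a1: "a \<ge> 1" and aq: "a \<le> q - 1" using Theta_sub[OF aT] by auto
  have b1: "b \<ge> 1" using Theta_sub[OF bT] by auto
  have au: "a \<noteq> u" using aT by (auto simp: Theta_def)
  have ab: "a < b" using lt by (simp add: a_def b_def)
  have pa: "\<forall>n. \<alpha> (Suc n) \<ge> 1" "\<forall>n. \<beta> (Suc n) \<ge> 1" using Theta_pos[OF \<alpha>] Theta_pos[OF \<beta>] by auto
  have ea: "\<alpha> = case_nat a (\<lambda>n. \<alpha> (Suc n))" unfolding a_def by (rule case_nat_split[symmetric])
  have eb: "\<beta> = case_nat b (\<lambda>n. \<beta> (Suc n))" unfolding b_def by (rule case_nat_split[symmetric])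
  have bda: "blockdigits u \<alpha> j = (if j < a then (if j = a - 1 then a else u) else blockdigits u (\<lambda>n. \<alpha> (Suc n)) (j - a))" for j
    by (subst ea, rule bd_cons[OF a1 pa(1)])
  have bdb: "blockdigits u \<beta> j = (if j < b then (if j = b - 1 then b else u) else blockdigits u (\<lambda>n. \<beta> (Suc n)) (j - b))" for j
    by (subst eb, rule bd_cons[OF b1 pa(2)])
  define k where "k = a - 1"
  have Sk: "Suc k = a" using a1 by (simp add: k_def)
  have "2 / real q ^ 4 * (1 / real q) ^ Suc k \<le> \<bar>negaq q (blockdigits u \<alpha>) - negaq q (blockdigits u \<beta>)\<bar>"
  proof (rule negaq_sep)
    show "q \<ge> 2" using q by simp
    show "dig q (blockdigits u \<alpha>)" "dig q (blockdigits u \<beta>)" using bd_dig \<alpha> \<beta> u by auto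
    show "blockdigits u \<alpha> i = blockdigits u \<beta> i" if "i < k" for i
      using that ab a1 unfolding bda bdb k_def by auto
    show "blockdigits u \<alpha> k \<noteq> blockdigits u \<beta> k"
      using ab a1 au unfolding bda bdb k_def by auto
    show "hav q (\<lambda>j. blockdigits u \<alpha> (j + Suc k))" "lav q (\<lambda>j. blockdigits u \<alpha> (j + Suc k))"
      "hav q (\<lambda>j. blockdigits u \<beta> (j + Suc k))" "lav q (\<lambda>j. blockdigits u \<beta> (j + Suc k))"
      using bd_avoid[OF q u \<alpha>, of "Suc k"] bd_avoid[OF q u \<beta>, of "Suc k"] by (simp_all del: add_Suc_right)
  qed
  moreover have "(1 / real q) ^ (q - 1) \<le> (1 / real q) ^ Suc k"
    using q aq Sk by (intro power_decreasing) auto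
  ultimately show ?thesis using q
    by (meson divide_nonneg_nonneg mult_left_mono of_nat_0_le_iff order_trans zero_le_numeral zero_le_power)
qed

lemma D_ifs:
  assumes q: "q > 3" and u: "u < q"
  shows "ifs (Theta q u) (\<lambda>a. a) (real q) (\<lambda>\<alpha>. negaq q (blockdigits u \<alpha>))
     (\<lambda>a. \<Sum>k<a. real (block u a ! k) / (- real q) ^ Suc k) (\<lambda>a. (1 / (- real q)) ^ a)
     (2 / real q ^ 4 * (1 / real q) ^ (q - 1)) 1"
proof
  show "finite (Theta q u)" by (rule finite_Theta)
  show "card (Theta q u) \<ge> 2" using card_Theta[OF q] .
  show "real q > 1" using q by simp
  show "0 < 2 / real q ^ 4 * (1 / real q) ^ (q - 1)" using q by simp
  fix a :: nat assume a: "a \<in> Theta q u"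
  show "1 \<le> a" using Theta_sub[OF a] by simp
  show "\<bar>(1 / - real q) ^ a\<bar> = (1 / real q) ^ a" by (simp add: power_abs)
  fix \<alpha> :: "nat \<Rightarrow> nat" assume \<alpha>: "\<forall>n. \<alpha> n \<in> Theta q u"
  have a1: "a \<ge> 1" using Theta_sub[OF a] by simp
  have caT: "\<forall>n. case_nat a \<alpha> n \<in> Theta q u" using a \<alpha> by (auto split: nat.split)
  have dg: "dig q (pre (block u a) (blockdigits u \<alpha>))"
    using bd_dig[OF caT u] unfolding bd_pre[OF a1 Theta_pos[OF \<alpha>]] .
  have len: "length (block u a) = a" using a1 by (simp add: block_def)
  have "negaq q (blockdigits u (case_nat a \<alpha>)) = negaq q (pre (block u a) (blockdigits u \<alpha>))"
    unfolding bd_pre[OF a1 Theta_pos[OF \<alpha>]] ..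
  also have "\<dots> = (\<Sum>k<a. real (pre (block u a) (blockdigits u \<alpha>) k) / (- real q) ^ Suc k)
      + (1 / - real q) ^ a * negaq q (\<lambda>k. pre (block u a) (blockdigits u \<alpha>) (k + a))"
    using negaq_split[OF _ dg, of a] q by simp
  also have "(\<lambda>k. pre (block u a) (blockdigits u \<alpha>) (k + a)) = blockdigits u \<alpha>"
    by (auto simp: pre_def len)
  also have "(\<Sum>k<a. real (pre (block u a) (blockdigits u \<alpha>) k) / (- real q) ^ Suc k)
      = (\<Sum>k<a. real (block u a ! k) / (- real q) ^ Suc k)"
    by (intro sum.cong) (auto simp: pre_def len)
  finally show "negaq q (blockdigits u (case_nat a \<alpha>)) =
     (\<Sum>k<a. real (block u a ! k) / (- real q) ^ Suc k) + (1 / - real q) ^ a * negaq q (blockdigits u \<alpha>)" .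
next
  fix \<alpha> \<beta> :: "nat \<Rightarrow> nat" assume \<alpha>: "\<forall>n. \<alpha> n \<in> Theta q u" and \<beta>: "\<forall>n. \<beta> n \<in> Theta q u"
  show "\<bar>negaq q (blockdigits u \<alpha>) - negaq q (blockdigits u \<beta>)\<bar> \<le> 1"
    using negaq_dist_le[of q] bd_dig[OF \<alpha> u] bd_dig[OF \<beta> u] q by simp
  assume ne: "\<alpha> 0 \<noteq> \<beta> 0"
  show "2 / real q ^ 4 * (1 / real q) ^ (q - 1) \<le> \<bar>negaq q (blockdigits u \<alpha>) - negaq q (blockdigits u \<beta>)\<bar>"
  proof (cases "\<alpha> 0 < \<beta> 0")
    case True then show ?thesis using D_sep_lt[OF q u \<alpha> \<beta>] by simp
  next
    case False
    then have "\<beta> 0 < \<alpha> 0" using ne by simp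
    then show ?thesis using D_sep_lt[OF q u \<beta> \<alpha>] by (simp add: abs_minus_commute)
  qed
qed


theorem theorem3p1:
  fixes q u :: nat
  assumes "q > 3" and "u < q"
  shows "(uncountable (Dh q u) \<and> perfect_set (Dh q u) \<and> nowhere_dense (Dh q u)
          \<and> Dh q u \<in> null_sets lebesgue \<and> self_similar (Dh q u)
          \<and> (\<Sum>p\<in>Theta q u. (1 / real q) powr (real p * hausdorff_dim (Dh q u))) = 1)
       \<and> (self_similar (Eh q u) \<and> hausdorff_dim (Eh q u) = log (real q) (real (card (Theta q u))))
       \<and> hausdorff_dim (Dh q u) \<noteq> hausdorff_dim (Eh q u)"
proof -
  interpret E: ifs "Theta q u" "\<lambda>_. 1" "real q" "negaq q" "\<lambda>a. real a / (- real q)" "\<lambda>a. 1 / (- real q)" "2 / real q ^ 5" 1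
    by (rule E_ifs[OF assms(1)])
  interpret D: ifs "Theta q u" "\<lambda>a. a" "real q" "\<lambda>\<alpha>. negaq q (blockdigits u \<alpha>)"
     "\<lambda>a. \<Sum>k<a. real (block u a ! k) / (- real q) ^ Suc k" "\<lambda>a. (1 / (- real q)) ^ a"
     "2 / real q ^ 4 * (1 / real q) ^ (q - 1)" 1
    by (rule D_ifs[OF assms])
  have KE: "E.K = Eh q u" by (auto simp: E.K_def E.C_def Eh_def)
  have KD: "D.K = Dh q u" by (auto simp: D.K_def D.C_def Dh_def)
  define \<Theta> where "\<Theta> = Theta q u"
  have q1: "real q > 1" using assms by simp
  have fin: "finite \<Theta>" unfolding \<Theta>_def by (rule finite_Theta)
  have card2: "card \<Theta> \<ge> 2" unfolding \<Theta>_def by (rule card_Theta[OF assms(1)])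
  have cardle: "card \<Theta> \<le> q - 1"
  proof -
    have "\<Theta> \<subseteq> {1..q-1}" by (auto simp: \<Theta>_def Theta_def)
    then have "card \<Theta> \<le> card {1..q-1}" by (intro card_mono) auto
    then show ?thesis by simp
  qed
  have sum1: "(\<Sum>a\<in>\<Theta>. (1 / real q) ^ a) < 1"
  proof -
    have "(\<Sum>a\<in>\<Theta>. (1 / real q) ^ a) \<le> of_nat (card \<Theta>) * (1 / real q)"
    proof (intro sum_bounded_above)
      fix a assume "a \<in> \<Theta>"
      then have "a \<ge> 1" using Theta_sub by (auto simp: \<Theta>_def)
      then show "(1 / real q) ^ a \<le> 1 / real q"
        using q1 power_decreasing[of 1 a "1 / real q"] by auto
    qed
    also have "\<dots> \<le> real (q - 1) * (1 / real q)" using cardle q1 by (intro mult_right_mono) auto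
    also have "\<dots> < 1" using assms by (simp add: of_nat_diff field_simps)
    finally show ?thesis .
  qed
  define \<phi> where "\<phi> = (\<lambda>s. \<Sum>a\<in>\<Theta>. ((1 / real q) ^ a) powr s)"
  have cont: "continuous_on {0..1} \<phi>"
    unfolding \<phi>_def using q1 by (intro continuous_intros) auto
  have phi0: "\<phi> 0 = card \<Theta>" using q1 by (simp add: \<phi>_def)
  have phi1: "\<phi> 1 < 1" using sum1 q1 by (simp add: \<phi>_def)
  obtain s0 where s0: "0 \<le> s0" "s0 \<le> 1" "\<phi> s0 = 1"
    using IVT2'[of \<phi> 1 1 0] phi0 phi1 cont card2 by force
  have s0pos: "s0 > 0" using s0 phi0 card2 by (cases "s0 = 0") auto
  have dimD: "hausdorff_dim (Dh q u) = s0"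
    using D.dim_K[OF s0pos] s0(3) unfolding KD \<phi>_def \<Theta>_def by simp
  have conv: "((1 / real q) ^ a) powr s = (1 / real q) powr (real a * s)" for a s
    using q1 by (simp add: powr_realpow[symmetric] powr_powr)
  have eqD: "(\<Sum>p\<in>Theta q u. (1 / real q) powr (real p * hausdorff_dim (Dh q u))) = 1"
    using s0(3) unfolding dimD \<phi>_def \<Theta>_def conv .
  define sE where "sE = log (real q) (real (card \<Theta>))"
  have sEpos: "sE > 0" using q1 card2 by (simp add: sE_def)
  have eqE: "(\<Sum>a\<in>\<Theta>. ((1 / real q) ^ 1) powr sE) = 1"
  proof -
    have "(1 / real q) powr sE = 1 / real (card \<Theta>)"
      using q1 card2 by (simp add: sE_def powr_divide)
    then show ?thesis using card2 by simp
  qed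
  have dimE: "hausdorff_dim (Eh q u) = sE"
    using E.dim_K[OF sEpos] eqE unfolding KE \<Theta>_def by simp
  have neq: "s0 \<noteq> sE"
  proof
    assume e: "s0 = sE"
    obtain b where b: "b \<in> \<Theta>" "b \<ge> 2"
    proof (cases "u = 2")
      case True then show ?thesis using that[of 3] assms by (auto simp: \<Theta>_def Theta_def)
    next
      case False then show ?thesis using that[of 2] assms by (auto simp: \<Theta>_def Theta_def)
    qed
    have "(\<Sum>a\<in>\<Theta>. ((1 / real q) ^ a) powr sE) < (\<Sum>a\<in>\<Theta>. ((1 / real q) ^ 1) powr sE)"
    proof (rule sum_strict_mono_ex1[OF fin])
      show "\<forall>a\<in>\<Theta>. ((1 / real q) ^ a) powr sE \<le> ((1 / real q) ^ 1) powr sE"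
      proof
        fix a assume "a \<in> \<Theta>"
        then have "a \<ge> 1" using Theta_sub by (auto simp: \<Theta>_def)
        then have "(1 / real q) ^ a \<le> (1 / real q) ^ 1" using q1 by (intro power_decreasing) auto
        then show "((1 / real q) ^ a) powr sE \<le> ((1 / real q) ^ 1) powr sE"
          using sEpos q1 by (intro powr_mono2) auto
      qed
      have "(1 / real q) ^ b < (1 / real q) ^ 1" using q1 b(2) by (intro power_strict_decreasing) auto
      then have "((1 / real q) ^ b) powr sE < ((1 / real q) ^ 1) powr sE"
        using sEpos q1 by (intro powr_less_mono2) auto
      then show "\<exists>a\<in>\<Theta>. ((1 / real q) ^ a) powr sE < ((1 / real q) ^ 1) powr sE" using b(1) by blast
    qed
    then show False using s0(3) e eqE by (simp add: \<phi>_def)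
  qed
  show ?thesis
    using D.uncountable_K D.perfect_K D.K_nowhere_dense D.K_null D.self_similar_K E.self_similar_K
      sum1 eqD dimE dimD neq unfolding KD KE \<Theta>_def sE_def by auto
qed


end
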